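(* Let $\bar\Gamma$ be a finite connected graph with $k$ vertices, equipped with a groupoid representation $(\mathscr H_v, U_f)$ as described in the context, let $\mathscr H=\bigoplus_v \mathscr H_v$ and let $H$ be the associated Hamiltonian. Let $\boldsymbol\tau=(\tau,r,<)$ and $\boldsymbol\tau'=(\tau',r',<')$ be two ordered rooted spanning trees of $\bar\Gamma$, with associated matrix Hamiltonians $H_{\boldsymbol\tau}\in M_k(\mathscr A_r)$ and $H_{\boldsymbol\tau'}\in M_k(\mathscr A_{r'})$. Then there is a matrix $M\in M_k(\mathscr A_r)$ with $MM^*=M^*M=\mathrm{id}$ such that $$M H_{\boldsymbol\tau} M^* = U^{\tau}_{r r'}\, H_{\boldsymbol\tau'}\, U^{\tau}_{r' r},$$ where $U^\tau_{rr'}$ and $U^\tau_{r'r}$ act diagonally (as scalar matrices) between $\mathscr H_{r'}^k$ and $\mathscr H_r^k$. Moreover $M$ is an element of the gauge group, i.e. $M$ is the product of a diagonal matrix whose diagonal entries are unitary elements of $\mathscr A_r$ and a permutation matrix.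
   Context: $\bar\Gamma$ is a finite connected graph (multiple edges and loops allowed). Each edge has two orientations; for an oriented edge $f$ write $\bar f$ for the reversed one. A groupoid representation of $\bar\Gamma$ assigns to every vertex $v$ a separable Hilbert space $\mathscr H_v$ and to every oriented edge $f$ from $v$ to $w$ a unitary $U_f:\mathscr H_v\to\mathscr H_w$ with $U_{\bar f}=U_f^{*}$. For a walk $\gamma$ traversing oriented edges $f_1,\dots,f_m$ in this order set $U(\gamma)=U_{f_m}\cdots U_{f_1}$. The Hamiltonian is $H=\sum_{f}U_f$ on $\mathscr H=\bigoplus_v\mathscr H_v$, summed over all oriented edges (each $U_f$ viewed as a partial isometry on $\mathscr H$); thus for vertices $u,w$ its component $H_{wu}:\mathscr H_u\to\mathscr H_w$ is $\sum_{f \text{ from } u \text{ to } w}U_f$. An ordered rooted spanning tree $\boldsymbol\tau=(\tau,r,<)$ consists of a spanning tree $\tau$, a root vertex $r$, and a total order $u_1<u_2<\dots<u_k$ of all vertices with $u_1=r$. For vertices $x,y$ let $U^\tau_{yx}:=U(\gamma)$ where $\gamma$ is the unique non-backtracking path in $\tau$ from $x$ to $y$ (so $U^\tau_{yx}:\mathscr H_x\to\mathscr H_y$ and $U^\tau_{xy}=(U^\tau_{yx})^*$). $\mathscr A_r\subset B(\mathscr H_r)$ denotes the $C^*$-algebra generated by the operators $U(\gamma)$ for closed walks $\gamma$ based at $r$. The matrix Hamiltonian $H_{\boldsymbol\tau}\in M_k(\mathscr A_r)$, acting on $\mathscr H_r^k$, has entries $(H_{\boldsymbol\tau})_{ij}=U^\tau_{r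 u_i}H_{u_iu_j}U^\tau_{u_j r}$. For $\boldsymbol\tau'$ the same definitions are made with $\tau'$, root $r'$ and order $u'_1<'\dots<'u'_k$. *)

theory Defs
  imports "HOL-Analysis.Analysis" "Graph_Theory.Graph_Theory"
begin

definition hnorm :: "('h \<Rightarrow> 'h \<Rightarrow> complex) \<Rightarrow> 'h \<Rightarrow> real" where
  "hnorm ip x = sqrt (Re (ip x x))"

definition complex_hilbert ::
  "(complex \<Rightarrow> 'h::ab_group_add \<Rightarrow> 'h) \<Rightarrow> ('h \<Rightarrow> 'h \<Rightarrow> complex) \<Rightarrow> bool" where
  "complex_hilbert sc ip \<longleftrightarrow>
     (\<forall>a b x. sc a (sc b x) = sc (a * b) x) \<and> (\<forall>x. sc 1 x = x) \<and>
     (\<forall>a x y. sc a (x + y) = sc a x + sc a y) \<and> (\<forall>a b x. sc (a + b) x = sc a x + sc b x) \<and>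
     (\<forall>x y z. ip x (y + z) = ip x y + ip x z) \<and> (\<forall>a x y. ip x (sc a y) = a * ip x y) \<and>
     (\<forall>x y. ip y x = cnj (ip x y)) \<and> (\<forall>x. 0 \<le> Re (ip x x)) \<and> (\<forall>x. ip x x = 0 \<longrightarrow> x = 0) \<and>
     (\<forall>X::nat \<Rightarrow> 'h. (\<forall>e>0. \<exists>N. \<forall>m\<ge>N. \<forall>n\<ge>N. hnorm ip (X m - X n) < e) \<longrightarrow>
        (\<exists>L. \<forall>e>0. \<exists>N. \<forall>n\<ge>N. hnorm ip (X n - L) < e))"

definition separable_set :: "('h::ab_group_add \<Rightarrow> 'h \<Rightarrow> complex) \<Rightarrow> 'h set \<Rightarrow> bool" where
  "separable_set ip S \<longleftrightarrow> (\<exists>D \<subseteq> S. countable D \<and> (\<forall>x\<in>S. \<forall>e>0. \<exists>d\<in>D. hnorm ip (x - d) < e))"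

definition bounded_op ::
  "(complex \<Rightarrow> 'h::ab_group_add \<Rightarrow> 'h) \<Rightarrow> ('h \<Rightarrow> 'h \<Rightarrow> complex) \<Rightarrow> ('h \<Rightarrow> 'h) \<Rightarrow> bool" where
  "bounded_op sc ip A \<longleftrightarrow> (\<forall>x y. A (x + y) = A x + A y) \<and> (\<forall>c x. A (sc c x) = sc c (A x)) \<and>
     (\<exists>K. \<forall>x. hnorm ip (A x) \<le> K * hnorm ip x)"

definition adj ::
  "(complex \<Rightarrow> 'h::ab_group_add \<Rightarrow> 'h) \<Rightarrow> ('h \<Rightarrow> 'h \<Rightarrow> complex) \<Rightarrow> ('h \<Rightarrow> 'h) \<Rightarrow> ('h \<Rightarrow> 'h)" where
  "adj sc ip A = (SOME B. bounded_op sc ip B \<and> (\<forall>x y. ip (A x) y = ip x (B y)))"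

definition opnorm :: "('h \<Rightarrow> 'h \<Rightarrow> complex) \<Rightarrow> ('h \<Rightarrow> 'h) \<Rightarrow> real" where
  "opnorm ip A = Sup {hnorm ip (A x) | x. hnorm ip x \<le> 1}"

definition cstar_gen ::
  "(complex \<Rightarrow> 'h::ab_group_add \<Rightarrow> 'h) \<Rightarrow> ('h \<Rightarrow> 'h \<Rightarrow> complex) \<Rightarrow> ('h \<Rightarrow> 'h) set \<Rightarrow> ('h \<Rightarrow> 'h) set" where
  "cstar_gen sc ip S = \<Inter> {C. S \<subseteq> C \<and> C \<subseteq> {A. bounded_op sc ip A} \<and>
      (\<forall>A\<in>C. \<forall>B\<in>C. (\<lambda>x. A x + B x) \<in> C) \<and>
      (\<forall>A\<in>C. \<forall>c. (\<lambda>x. sc c (A x)) \<in> C) \<and>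
      (\<forall>A\<in>C. \<forall>B\<in>C. A \<circ> B \<in> C) \<and>
      (\<forall>A\<in>C. adj sc ip A \<in> C) \<and>
      (\<forall>X L. (\<forall>n. X n \<in> C) \<and> bounded_op sc ip L \<and>
             (\<lambda>n. opnorm ip (\<lambda>x. X n x - L x)) \<longlonglongrightarrow> 0 \<longrightarrow> L \<in> C)}"

section \<open>Graphs: finite connected graph as a bidirected digraph (oriented edges, reversal erev)\<close>

definition non_backtracking :: "('e \<Rightarrow> 'e) \<Rightarrow> 'e list \<Rightarrow> bool" where
  "non_backtracking erev p \<longleftrightarrow> (\<forall>i. Suc i < length p \<longrightarrow> p ! Suc i \<noteq> erev (p ! i))"

text \<open>A spanning tree, given by its set T of oriented edges (closed under reversal):
connected on all vertices and without non-trivial non-backtracking closed walks (cycles).\<close>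
definition is_spanning_tree :: "('v,'e) pre_digraph \<Rightarrow> ('e \<Rightarrow> 'e) \<Rightarrow> 'e set \<Rightarrow> bool" where
  "is_spanning_tree G erev T \<longleftrightarrow> T \<subseteq> arcs G \<and> (\<forall>a\<in>T. erev a \<in> T) \<and>
     connected (G\<lparr>arcs := T\<rparr>) \<and>
     \<not> (\<exists>u p. p \<noteq> [] \<and> pre_digraph.awalk (G\<lparr>arcs := T\<rparr>) u p u \<and> non_backtracking erev p)"

definition tree_path :: "('v,'e) pre_digraph \<Rightarrow> ('e \<Rightarrow> 'e) \<Rightarrow> 'e set \<Rightarrow> 'v \<Rightarrow> 'v \<Rightarrow> 'e list" where
  "tree_path G erev T x y = (THE p. pre_digraph.awalk (G\<lparr>arcs := T\<rparr>) x p y \<and> non_backtracking erev p)"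

text \<open>The Hilbert space is H = direct sum of the H_v, realised on one Hilbert space with
mutually orthogonal projections P v onto H_v summing to the identity. Each U f for an oriented
edge f from v to w is a unitary H_v \<rightarrow> H_w, viewed as a partial isometry on H.\<close>
definition groupoid_rep ::
  "(complex \<Rightarrow> 'h::ab_group_add \<Rightarrow> 'h) \<Rightarrow> ('h \<Rightarrow> 'h \<Rightarrow> complex) \<Rightarrow> ('v,'e) pre_digraph \<Rightarrow>
   ('e \<Rightarrow> 'e) \<Rightarrow> ('v \<Rightarrow> 'h \<Rightarrow> 'h) \<Rightarrow> ('e \<Rightarrow> 'h \<Rightarrow> 'h) \<Rightarrow> bool" where
  "groupoid_rep sc ip G erev P U \<longleftrightarrow>
     complex_hilbert sc ip \<and>
     (\<forall>v\<in>verts G. bounded_op sc ip (P v) \<and> P v \<circ> P v = P v \<and> adj sc ip (P v) = P v \<and>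
                  separable_set ip (range (P v))) \<and>
     (\<forall>v\<in>verts G. \<forall>w\<in>verts G. v \<noteq> w \<longrightarrow> P v \<circ> P w = (\<lambda>_. 0)) \<and>
     (\<forall>x. (\<Sum>v\<in>verts G. P v x) = x) \<and>
     (\<forall>f\<in>arcs G. bounded_op sc ip (U f) \<and>
        U f = P (head G f) \<circ> U f \<circ> P (tail G f) \<and>
        adj sc ip (U f) \<circ> U f = P (tail G f) \<and> U f \<circ> adj sc ip (U f) = P (head G f) \<and>
        U (erev f) = adj sc ip (U f))"

text \<open>U(gamma) = U_fm ... U_f1 for the walk f1,...,fm starting at x (identity of H_x for
the empty walk).\<close>
definition Uwalk :: "('v \<Rightarrow> 'h \<Rightarrow> 'h) \<Rightarrow> ('e \<Rightarrow> 'h \<Rightarrow> 'h) \<Rightarrow> 'v \<Rightarrow> 'e list \<Rightarrow> 'h \<Rightarrow> 'h" where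
  "Uwalk P U x p = foldl (\<lambda>A f. U f \<circ> A) (P x) p"

text \<open>U^tau_{yx} : H_x \<rightarrow> H_y.\<close>
definition Utree :: "('v,'e) pre_digraph \<Rightarrow> ('e \<Rightarrow> 'e) \<Rightarrow> ('v \<Rightarrow> 'h \<Rightarrow> 'h) \<Rightarrow> ('e \<Rightarrow> 'h \<Rightarrow> 'h) \<Rightarrow>
    'e set \<Rightarrow> 'v \<Rightarrow> 'v \<Rightarrow> 'h \<Rightarrow> 'h" where
  "Utree G erev P U T y x = Uwalk P U x (tree_path G erev T x y)"

definition Hamiltonian :: "('v,'e) pre_digraph \<Rightarrow> ('e \<Rightarrow> 'h::ab_group_add \<Rightarrow> 'h) \<Rightarrow> 'h \<Rightarrow> 'h" where
  "Hamiltonian G U = (\<lambda>x. \<Sum>f\<in>arcs G. U f x)"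

definition Hcomp :: "('v,'e) pre_digraph \<Rightarrow> ('e \<Rightarrow> 'h::ab_group_add \<Rightarrow> 'h) \<Rightarrow> 'v \<Rightarrow> 'v \<Rightarrow> 'h \<Rightarrow> 'h" where
  "Hcomp G U w u = (\<lambda>x. \<Sum>f\<in>{f\<in>arcs G. tail G f = u \<and> head G f = w}. U f x)"

text \<open>A_r: the C*-algebra generated by U(gamma) for closed walks gamma at r (operators on H_r,
viewed as operators on H supported on H_r).\<close>
definition Aalg ::
  "(complex \<Rightarrow> 'h::ab_group_add \<Rightarrow> 'h) \<Rightarrow> ('h \<Rightarrow> 'h \<Rightarrow> complex) \<Rightarrow> ('v,'e) pre_digraph \<Rightarrow>
   ('v \<Rightarrow> 'h \<Rightarrow> 'h) \<Rightarrow> ('e \<Rightarrow> 'h \<Rightarrow> 'h) \<Rightarrow> 'v \<Rightarrow> ('h \<Rightarrow> 'h) set" where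
  "Aalg sc ip G P U r = cstar_gen sc ip {Uwalk P U r p | p. pre_digraph.awalk G r p r}"

text \<open>Ordered rooted spanning tree (T, r, ord): ord enumerates the vertices u_1 < ... < u_k
as ord 0, ..., ord (k-1) (0-based), with ord 0 = r.\<close>
definition ordered_rooted_spanning_tree ::
  "('v,'e) pre_digraph \<Rightarrow> ('e \<Rightarrow> 'e) \<Rightarrow> 'e set \<Rightarrow> 'v \<Rightarrow> (nat \<Rightarrow> 'v) \<Rightarrow> bool" where
  "ordered_rooted_spanning_tree G erev T r ord \<longleftrightarrow>
     is_spanning_tree G erev T \<and> bij_betw ord {..<card (verts G)} (verts G) \<and> ord 0 = r"

type_synonym 'h opmat = "nat \<Rightarrow> nat \<Rightarrow> 'h \<Rightarrow> 'h"

definition mat_mult :: "nat \<Rightarrow> ('h::ab_group_add) opmat \<Rightarrow> 'h opmat \<Rightarrow> 'h opmat" where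
  "mat_mult k A B = (\<lambda>i j x. \<Sum>l<k. A i l (B l j x))"

definition mat_adj :: "(complex \<Rightarrow> 'h::ab_group_add \<Rightarrow> 'h) \<Rightarrow> ('h \<Rightarrow> 'h \<Rightarrow> complex) \<Rightarrow> 'h opmat \<Rightarrow> 'h opmat" where
  "mat_adj sc ip A = (\<lambda>i j. adj sc ip (A j i))"

text \<open>Identity of M_k(A_r): diagonal with the identity P r of H_r.\<close>
definition mat_id :: "('v \<Rightarrow> 'h::ab_group_add \<Rightarrow> 'h) \<Rightarrow> 'v \<Rightarrow> 'h opmat" where
  "mat_id P r = (\<lambda>i j. if i = j then P r else (\<lambda>_. 0))"

definition mat_eq :: "nat \<Rightarrow> 'h opmat \<Rightarrow> 'h opmat \<Rightarrow> bool" where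
  "mat_eq k A B \<longleftrightarrow> (\<forall>i<k. \<forall>j<k. A i j = B i j)"

definition diag_mat :: "(nat \<Rightarrow> 'h \<Rightarrow> 'h::ab_group_add) \<Rightarrow> 'h opmat" where
  "diag_mat D = (\<lambda>i j. if i = j then D i else (\<lambda>_. 0))"

definition perm_mat :: "('v \<Rightarrow> 'h::ab_group_add \<Rightarrow> 'h) \<Rightarrow> 'v \<Rightarrow> (nat \<Rightarrow> nat) \<Rightarrow> 'h opmat" where
  "perm_mat P r \<sigma> = (\<lambda>i j. if i = \<sigma> j then P r else (\<lambda>_. 0))"

definition mat_ham :: "('v,'e) pre_digraph \<Rightarrow> ('e \<Rightarrow> 'e) \<Rightarrow> ('v \<Rightarrow> 'h::ab_group_add \<Rightarrow> 'h) \<Rightarrow>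
    ('e \<Rightarrow> 'h \<Rightarrow> 'h) \<Rightarrow> 'e set \<Rightarrow> 'v \<Rightarrow> (nat \<Rightarrow> 'v) \<Rightarrow> 'h opmat" where
  "mat_ham G erev P U T r ord =
     (\<lambda>i j. Utree G erev P U T r (ord i) \<circ> Hcomp G U (ord i) (ord j) \<circ> Utree G erev P U T (ord j) r)"

definition unitary_in :: "(complex \<Rightarrow> 'h::ab_group_add \<Rightarrow> 'h) \<Rightarrow> ('h \<Rightarrow> 'h \<Rightarrow> complex) \<Rightarrow>
    ('h \<Rightarrow> 'h) set \<Rightarrow> ('h \<Rightarrow> 'h) \<Rightarrow> ('h \<Rightarrow> 'h) \<Rightarrow> bool" where
  "unitary_in sc ip A e d \<longleftrightarrow> d \<in> A \<and> d \<circ> adj sc ip d = e \<and> adj sc ip d \<circ> d = e"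

end

theory Submission
  imports Defs
begin


locale chil =
  fixes sc :: "complex \<Rightarrow> 'h::ab_group_add \<Rightarrow> 'h" and ip :: "'h \<Rightarrow> 'h \<Rightarrow> complex"
  assumes ch: "complex_hilbert sc ip"
begin

lemmas chp = ch[unfolded complex_hilbert_def]

lemma sc_assoc: "sc a (sc b x) = sc (a * b) x" by (rule conjunct1[OF chp, rule_format])
lemma sc_one[simp]: "sc 1 x = x" by (rule conjunct1[OF conjunct2[OF chp], rule_format])
lemma sc_add_right: "sc a (x + y) = sc a x + sc a y" by (rule conjunct1[OF conjunct2[OF conjunct2[OF chp]], rule_format])
lemma sc_add_left: "sc (a + b) x = sc a x + sc b x" by (rule conjunct1[OF conjunct2[OF conjunct2[OF conjunct2[OF chp]]], rule_format])
lemma ip_add_right: "ip x (y + z) = ip x y + ip x z" by (rule conjunct1[OF conjunct2[OF conjunct2[OF conjunct2[OF conjunct2[OF chp]]]], rule_format])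
lemma ip_sc_right: "ip x (sc a y) = a * ip x y" by (rule conjunct1[OF conjunct2[OF conjunct2[OF conjunct2[OF conjunct2[OF conjunct2[OF chp]]]]], rule_format])
lemma ip_sym: "ip y x = cnj (ip x y)" by (rule conjunct1[OF conjunct2[OF conjunct2[OF conjunct2[OF conjunct2[OF conjunct2[OF conjunct2[OF chp]]]]]], rule_format])
lemma ip_pos: "0 \<le> Re (ip x x)" by (rule conjunct1[OF conjunct2[OF conjunct2[OF conjunct2[OF conjunct2[OF conjunct2[OF conjunct2[OF conjunct2[OF chp]]]]]]], rule_format])
lemma ip_def0: "ip x x = 0 \<Longrightarrow> x = 0" by (rule conjunct1[OF conjunct2[OF conjunct2[OF conjunct2[OF conjunct2[OF conjunct2[OF conjunct2[OF conjunct2[OF conjunct2[OF chp]]]]]]]], rule_format])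
lemma complete: "(\<forall>e>0. \<exists>N. \<forall>m\<ge>N. \<forall>n\<ge>N. hnorm ip (X m - X n) < e) \<Longrightarrow>
        (\<exists>L. \<forall>e>0. \<exists>N. \<forall>n\<ge>N. hnorm ip (X n - L) < e)" for X :: "nat \<Rightarrow> 'h"
  by (rule mp[OF spec[OF conjunct2[OF conjunct2[OF conjunct2[OF conjunct2[OF conjunct2[OF conjunct2[OF conjunct2[OF conjunct2[OF conjunct2[OF chp]]]]]]]]], of X]])

lemma sc_zero_left[simp]: "sc 0 x = 0"
proof -
  have "sc 0 x = sc 0 x + sc 0 x" using sc_add_left[of 0 0 x] unfolding add_0_right .
  then show ?thesis by (rule add_cancel_right_right[THEN iffD1])
qed
lemma sc_zero_right[simp]: "sc a 0 = 0"
proof -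
  have "sc a 0 = sc a 0 + sc a 0" using sc_add_right[of a 0 0] unfolding add_0_right .
  then show ?thesis by (rule add_cancel_right_right[THEN iffD1])
qed
lemma sc_minus_right: "sc a (- x) = - sc a x"
proof -
  have "sc a x + sc a (- x) = 0" by (simp only: sc_add_right[symmetric] add.right_inverse sc_zero_right)
  then show ?thesis by (rule add.inverse_unique[symmetric])
qed
lemma sc_diff_right: "sc a (x - y) = sc a x - sc a y"
  by (simp only: diff_conv_add_uminus sc_add_right sc_minus_right)
lemma sc_minus_left: "sc (- a) x = - sc a x"
proof -
  have "sc a x + sc (- a) x = 0" by (simp only: sc_add_left[symmetric] add.right_inverse sc_zero_left)
  then show ?thesis by (rule add.inverse_unique[symmetric])
qed
lemma sc_diff_left: "sc (a - b) x = sc a x - sc b x"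
  by (simp only: diff_conv_add_uminus sc_add_left sc_minus_left)

lemma ip_zero_right[simp]: "ip x 0 = 0"
proof -
  have "ip x 0 = ip x 0 + ip x 0" using ip_add_right[of x 0 0] unfolding add_0_right .
  then show ?thesis by (rule add_cancel_right_right[THEN iffD1])
qed
lemma ip_minus_right: "ip x (- y) = - ip x y"
proof -
  have "ip x y + ip x (- y) = 0" by (simp only: ip_add_right[symmetric] add.right_inverse ip_zero_right)
  then show ?thesis by (rule add.inverse_unique[symmetric])
qed
lemma ip_diff_right: "ip x (y - z) = ip x y - ip x z"
  by (simp only: diff_conv_add_uminus ip_add_right ip_minus_right)
lemma ip_sym': "cnj (ip x y) = ip y x" by (rule ip_sym[symmetric])
lemma ip_add_left: "ip (x + y) z = ip x z + ip y z"
  by (subst ip_sym) (simp only: ip_add_right complex_cnj_add ip_sym')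
lemma ip_sc_left: "ip (sc a x) y = cnj a * ip x y"
  by (subst ip_sym) (simp only: ip_sc_right complex_cnj_mult ip_sym')
lemma ip_zero_left[simp]: "ip 0 y = 0"
  by (subst ip_sym) simp
lemma ip_minus_left: "ip (- x) y = - ip x y"
  by (subst ip_sym) (simp only: ip_minus_right complex_cnj_minus ip_sym')
lemma ip_diff_left: "ip (x - y) z = ip x z - ip y z"
  by (simp only: diff_conv_add_uminus ip_add_left ip_minus_left)

lemmas ip_simps = ip_add_right ip_add_left ip_sc_right ip_sc_left ip_minus_right ip_minus_left
  ip_diff_right ip_diff_left

lemma ip_self_real: "ip x x = complex_of_real (Re (ip x x))"
proof -
  have "ip x x = cnj (ip x x)" by (rule ip_sym)
  then have "Im (ip x x) = Im (cnj (ip x x))" by simp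
  then have "Im (ip x x) = 0" by simp
  then show ?thesis by (simp add: complex_eq_iff)
qed

lemma ip_self_eq0: "ip x x = 0 \<longleftrightarrow> x = 0" using ip_def0 by auto

lemma Re_ip_eq0: "Re (ip x x) = 0 \<longleftrightarrow> x = 0"
proof
  assume "Re (ip x x) = 0"
  then have "ip x x = 0" using ip_self_real[of x] by simp
  then show "x = 0" by (rule ip_def0)
qed simp

lemma hnorm_nonneg: "0 \<le> hnorm ip x" unfolding hnorm_def using ip_pos[of x] by simp
lemma hnorm_sq: "(hnorm ip x)^2 = Re (ip x x)" by (simp add: hnorm_def ip_pos)
lemma hnorm_eq0: "hnorm ip x = 0 \<longleftrightarrow> x = 0" using ip_pos[of x] by (simp add: hnorm_def Re_ip_eq0)
lemma hnorm_0[simp]: "hnorm ip 0 = 0" by (simp add: hnorm_eq0)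

lemma ip_ext: "(\<And>x. ip x a = ip x b) \<Longrightarrow> a = b"
proof -
  assume h: "\<And>x. ip x a = ip x b"
  have "ip (a - b) (a - b) = 0" by (simp add: ip_diff_right h)
  then show "a = b" using ip_def0[of "a - b"] by simp
qed

lemma Re_ip_sc_self: "Re (ip (sc a x) (sc a x)) = (cmod a)^2 * Re (ip x x)"
proof -
  have "ip (sc a x) (sc a x) = (cnj a * a) * ip x x" by (simp add: ip_simps)
  also have "cnj a * a = complex_of_real ((cmod a)^2)" by (subst mult.commute) (rule complex_norm_square[symmetric])
  finally show ?thesis by (subst ip_self_real) (simp del: of_real_power)
qed

lemma hnorm_sc: "hnorm ip (sc a x) = cmod a * hnorm ip x"
  by (simp add: hnorm_def Re_ip_sc_self real_sqrt_mult)

lemma hnorm_minus: "hnorm ip (- x) = hnorm ip x"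
  by (simp add: hnorm_def ip_simps)

lemma hnorm_diff_commute: "hnorm ip (x - y) = hnorm ip (y - x)"
  by (metis hnorm_minus minus_diff_eq)

lemma ip_expand: "ip (x + y) (x + y) = ip x x + ip x y + cnj (ip x y) + ip y y"
  by (simp add: ip_simps ip_sym[of y x])

lemma Re_ip_expand: "Re (ip (x + y) (x + y)) = Re (ip x x) + 2 * Re (ip x y) + Re (ip y y)"
  by (simp add: ip_expand)

lemma cauchy_schwarz: "cmod (ip x y) \<le> hnorm ip x * hnorm ip y"
proof (cases "y = 0")
  case True then show ?thesis by simp
next
  case False
  define b where "b = Re (ip y y)"
  define c where "c = ip x y"
  have b: "b > 0" using False Re_ip_eq0 ip_pos b_def by (metis less_eq_real_def)
  have yy: "ip y y = complex_of_real b" using ip_self_real b_def by metis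
  define t where "t = cnj c / complex_of_real b"
  have cc: "c * cnj c = complex_of_real ((cmod c)^2)" by (rule complex_norm_square[symmetric])
  have e1: "ip (x - sc t y) (x - sc t y) = ip x x - t * c - cnj t * cnj c + cnj t * (t * ip y y)"
    by (simp only: ip_diff_left ip_diff_right ip_sc_left ip_sc_right c_def ip_sym[of y x]) (simp add: algebra_simps)
  have e2: "t * c = complex_of_real ((cmod c)^2 / b)" using b cc
    by (simp add: t_def mult.commute)
  have e3: "cnj t * cnj c = complex_of_real ((cmod c)^2 / b)" using b cc
    by (simp add: t_def mult.commute)
  have e4: "cnj t * (t * ip y y) = complex_of_real ((cmod c)^2 / b)" using b cc
    by (simp add: t_def yy mult.commute)
  have "ip (x - sc t y) (x - sc t y) = ip x x - complex_of_real ((cmod c)^2 / b)"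
    unfolding e1 e2 e3 e4 by simp
  then have "0 \<le> Re (ip x x) - (cmod c)^2 / b" using ip_pos[of "x - sc t y"] by simp
  then have "(cmod c)^2 \<le> Re (ip x x) * b" using b by (simp add: field_simps)
  then have "(cmod c)^2 \<le> (hnorm ip x * hnorm ip y)^2"
    by (simp add: power_mult_distrib hnorm_sq b_def)
  then show ?thesis unfolding c_def
    by (meson hnorm_nonneg mult_nonneg_nonneg power2_le_imp_le)
qed

lemma hnorm_triangle: "hnorm ip (x + y) \<le> hnorm ip x + hnorm ip y"
proof -
  have "Re (ip x y) \<le> hnorm ip x * hnorm ip y"
    using cauchy_schwarz[of x y] complex_Re_le_cmod[of "ip x y"] by linarith
  then have "(hnorm ip (x + y))^2 \<le> (hnorm ip x + hnorm ip y)^2"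
    by (simp add: hnorm_sq Re_ip_expand power2_sum)
  then show ?thesis by (meson add_nonneg_nonneg hnorm_nonneg power2_le_imp_le)
qed

lemma hnorm_triangle_diff: "hnorm ip (x - z) \<le> hnorm ip (x - y) + hnorm ip (y - z)"
  using hnorm_triangle[of "x - y" "y - z"] by simp

lemma parallelogram:
  "Re (ip (x - y) (x - y)) + Re (ip (x + y) (x + y)) = 2 * Re (ip x x) + 2 * Re (ip y y)"
proof -
  have "Re (ip (x - y) (x - y)) = Re (ip x x) - Re (ip x y) - Re (ip y x) + Re (ip y y)"
    by (simp add: ip_diff_left ip_diff_right)
  moreover have "Re (ip y x) = Re (ip x y)" by (subst ip_sym) simp
  ultimately show ?thesis using Re_ip_expand[of x y] by linarith
qed


lemma riesz:
  fixes \<phi> :: "'h \<Rightarrow> complex"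
  assumes add: "\<And>x y. \<phi> (x + y) = \<phi> x + \<phi> y" and hom: "\<And>a x. \<phi> (sc a x) = cnj a * \<phi> x"
    and bnd: "\<And>x. cmod (\<phi> x) \<le> C * hnorm ip x"
  shows "\<exists>z. \<forall>x. \<phi> x = ip x z"
proof (cases "\<forall>x. \<phi> x = 0")
  case True then show ?thesis by (rule_tac x=0 in exI) simp
next
  case False
  then obtain x0 where x0: "\<phi> x0 \<noteq> 0" by blast
  have phi0: "\<phi> 0 = 0" using add[of 0 0] by simp
  have phidiff: "\<phi> (x - y) = \<phi> x - \<phi> y" for x y
    using add[of "x - y" y] by simp
  define S where "S = {x. \<phi> x = 1}"
  define N2 where "N2 x = Re (ip x x)" for x
  have N2pos: "0 \<le> N2 x" for x unfolding N2_def by (rule ip_pos)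
  have x1: "sc (cnj (1 / \<phi> x0)) x0 \<in> S" using x0 by (simp add: S_def hom)
  define d2 where "d2 = Inf (N2 ` S)"
  have bdd: "bdd_below (N2 ` S)" using N2pos by (intro bdd_belowI[of _ 0]) auto
  have ne: "N2 ` S \<noteq> {}" using x1 by blast
  have d2pos: "0 \<le> d2" unfolding d2_def using ne N2pos by (auto intro: cInf_greatest)
  have low: "x \<in> S \<Longrightarrow> d2 \<le> N2 x" for x unfolding d2_def using bdd by (auto intro: cInf_lower)
  have "\<forall>n::nat. \<exists>x. x \<in> S \<and> N2 x < d2 + 1 / real (Suc n)"
  proof
    fix n :: nat
    have "d2 < d2 + 1 / real (Suc n)" by simp
    then show "\<exists>x. x \<in> S \<and> N2 x < d2 + 1 / real (Suc n)"
      unfolding d2_def using cInf_less_iff[OF ne bdd] by blast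
  qed
  then obtain X where X: "\<And>n. X n \<in> S" "\<And>n. N2 (X n) < d2 + 1 / real (Suc n)" by metis
  have mid: "x \<in> S \<Longrightarrow> y \<in> S \<Longrightarrow> 4 * d2 \<le> N2 (x + y)" for x y
  proof -
    assume "x \<in> S" "y \<in> S"
    then have "sc (1/2) (x + y) \<in> S" by (simp add: S_def hom add)
    then have "d2 \<le> N2 (sc (1/2) (x + y))" by (rule low)
    also have "\<dots> = N2 (x + y) / 4" unfolding N2_def Re_ip_sc_self by (simp add: power2_eq_square)
    finally show ?thesis by simp
  qed
  have XX: "N2 (X m - X n) < 2 / real (Suc m) + 2 / real (Suc n)" for m n
  proof -
    have "N2 (X m - X n) = 2 * N2 (X m) + 2 * N2 (X n) - N2 (X m + X n)"
      using parallelogram[of "X m" "X n"] unfolding N2_def by simp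
    also have "\<dots> \<le> 2 * N2 (X m) + 2 * N2 (X n) - 4 * d2" using mid[OF X(1) X(1)] by simp
    also have "\<dots> < 2 / real (Suc m) + 2 / real (Suc n)" using X(2)[of m] X(2)[of n] by simp
    finally show ?thesis .
  qed
  have hn_lt: "N2 v < e^2 \<Longrightarrow> 0 < e \<Longrightarrow> hnorm ip v < e" for v e
    by (metis N2_def hnorm_nonneg hnorm_sq less_imp_le power_less_imp_less_base)
  have "\<forall>e>0. \<exists>N. \<forall>m\<ge>N. \<forall>n\<ge>N. hnorm ip (X m - X n) < e"
  proof (intro allI impI)
    fix e :: real assume e: "e > 0"
    obtain N :: nat where N: "4 / e^2 < real N" using reals_Archimedean2 by blast
    have N4: "4 / real (Suc N) < e^2"
    proof -
      have "4 < real N * e^2" using N e by (simp add: field_simps)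
      also have "\<dots> < real (Suc N) * e^2" using e by simp
      finally show ?thesis by (simp add: field_simps)
    qed
    have b2: "2 / real (Suc m) + 2 / real (Suc n) \<le> 4 / real (Suc N)" if "m \<ge> N" "n \<ge> N" for m n
    proof -
      have "2 / real (Suc m) \<le> 2 / real (Suc N)" using that by (simp add: frac_le)
      moreover have "2 / real (Suc n) \<le> 2 / real (Suc N)" using that by (simp add: frac_le)
      ultimately show ?thesis by simp
    qed
    show "\<exists>N. \<forall>m\<ge>N. \<forall>n\<ge>N. hnorm ip (X m - X n) < e"
    proof (intro exI allI impI)
      fix m n assume mn: "N \<le> m" "N \<le> n"
      have "N2 (X m - X n) < e^2" using XX[of m n] b2[OF mn] N4 by linarith
      then show "hnorm ip (X m - X n) < e" using hn_lt e by blast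
    qed
  qed
  from complete[OF this] obtain L where L: "\<And>e. e > 0 \<Longrightarrow> \<exists>N. \<forall>n\<ge>N. hnorm ip (X n - L) < e" by blast
  have phiL: "\<phi> L = 1"
  proof (rule ccontr)
    assume ne1: "\<phi> L \<noteq> 1"
    define g where "g = cmod (1 - \<phi> L)"
    have g: "g > 0" using ne1 by (simp add: g_def)
    define e where "e = g / (\<bar>C\<bar> + 1)"
    have e: "e > 0" using g by (simp add: e_def)
    obtain N where "\<forall>n\<ge>N. hnorm ip (X n - L) < e" using L[OF e] by blast
    then have hN: "hnorm ip (X N - L) < e" by simp
    have "g = cmod (\<phi> (X N - L))" using X(1)[of N] by (simp add: g_def phidiff S_def)
    also have "\<dots> \<le> C * hnorm ip (X N - L)" by (rule bnd)
    also have "\<dots> \<le> \<bar>C\<bar> * hnorm ip (X N - L)" using hnorm_nonneg by (simp add: mult_right_mono)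
    also have "\<dots> \<le> \<bar>C\<bar> * e" using hN by (simp add: mult_left_mono)
    also have "\<dots> < g" using g by (simp add: e_def field_simps)
    finally show False by simp
  qed
  then have LS: "L \<in> S" by (simp add: S_def)
  have N2L: "N2 L \<le> d2"
  proof (rule ccontr)
    assume "\<not> N2 L \<le> d2"
    then have gt: "sqrt d2 < hnorm ip L" by (simp add: hnorm_def N2_def)
    define g where "g = hnorm ip L - sqrt d2"
    have g: "g > 0" using gt by (simp add: g_def)
    obtain N where N: "\<forall>n\<ge>N. hnorm ip (X n - L) < g / 3" using L[of "g/3"] g by auto
    obtain M :: nat where M: "9 / g^2 < real M" using reals_Archimedean2 by blast
    define n where "n = max N M"
    have hn: "hnorm ip (X n - L) < g / 3" using N by (simp add: n_def)
    have "9 < real M * g^2" using M g by (simp add: field_simps)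
    also have "\<dots> \<le> real (Suc n) * g^2" using g by (simp add: n_def mult_right_mono)
    finally have "1 / real (Suc n) < (g/3)^2" by (simp add: field_simps power2_eq_square)
    then have "sqrt (1 / real (Suc n)) < sqrt ((g/3)^2)" by (rule real_sqrt_less_mono)
    then have sq: "sqrt (1 / real (Suc n)) < g / 3" using g by simp
    have "hnorm ip (X n) = sqrt (N2 (X n))" by (simp add: hnorm_def N2_def)
    also have "\<dots> \<le> sqrt (d2 + 1 / real (Suc n))" using X(2)[of n] by simp
    also have "\<dots> \<le> sqrt d2 + sqrt (1 / real (Suc n))" using d2pos by (simp add: sqrt_add_le_add_sqrt)
    finally have "hnorm ip (X n) < sqrt d2 + g / 3" using sq by simp
    moreover have "hnorm ip L \<le> hnorm ip (X n) + hnorm ip (L - X n)"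
      using hnorm_triangle[of "X n" "L - X n"] by simp
    moreover have "hnorm ip (L - X n) < g / 3" using hn hnorm_diff_commute by metis
    ultimately have "hnorm ip L < sqrt d2 + g" using g by linarith
    then show False by (simp add: g_def)
  qed
  have minL: "x \<in> S \<Longrightarrow> N2 L \<le> N2 x" for x using N2L low by fastforce
  have orth: "ip L w = 0" if w: "\<phi> w = 0" for w
  proof (rule ccontr)
    assume cne: "ip L w \<noteq> 0"
    define c where "c = ip L w"
    have cc': "cnj c * c = complex_of_real ((cmod c)^2)"
      by (subst mult.commute) (rule complex_norm_square[symmetric])
    define s where "s = 1 / (N2 w + 1)"
    have s: "s > 0" using N2pos[of w] by (simp add: s_def)
    define t where "t = - complex_of_real s * cnj c"
    have "L + sc t w \<in> S" using phiL w by (simp add: S_def add hom)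
    then have "N2 L \<le> N2 (L + sc t w)" by (rule minL)
    also have "\<dots> = N2 L + 2 * Re (ip L (sc t w)) + N2 (sc t w)"
      unfolding N2_def by (rule Re_ip_expand)
    also have "ip L (sc t w) = - complex_of_real (s * (cmod c)^2)"
      using cc' by (simp add: ip_sc_right t_def c_def[symmetric] mult.assoc)
    also have "N2 (sc t w) = (s * cmod c)^2 * N2 w"
      unfolding N2_def Re_ip_sc_self by (simp add: t_def norm_mult abs_of_pos s)
    finally have "0 \<le> - 2 * (s * (cmod c)^2) + (s * cmod c)^2 * N2 w" by simp
    then have "0 \<le> s * (cmod c)^2 * (s * N2 w - 2)" by (simp add: algebra_simps power2_eq_square)
    moreover have "s * (cmod c)^2 > 0" using s cne by (simp add: c_def)
    ultimately have "0 \<le> s * N2 w - 2" by (simp add: zero_le_mult_iff)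
    moreover have "s * N2 w < 1" using N2pos[of w] by (simp add: s_def)
    ultimately show False by simp
  qed
  have Lne: "L \<noteq> 0" using phiL phi0 by auto
  have N2Lpos: "N2 L > 0" using Lne Re_ip_eq0 N2pos unfolding N2_def by (metis less_eq_real_def)
  have ipLL: "ip L L = complex_of_real (N2 L)" unfolding N2_def by (rule ip_self_real)
  show ?thesis
  proof (rule exI[of _ "sc (complex_of_real (1 / N2 L)) L"], rule allI)
    fix x
    have "\<phi> (x - sc (cnj (\<phi> x)) L) = 0" using phiL by (simp add: phidiff hom)
    then have "ip L (x - sc (cnj (\<phi> x)) L) = 0" by (rule orth)
    then have "ip L x = cnj (\<phi> x) * ip L L" by (simp add: ip_diff_right ip_sc_right)
    then have "ip x L = \<phi> x * complex_of_real (N2 L)"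
      using ip_sym[of x L] by (simp add: ipLL)
    then show "\<phi> x = ip x (sc (complex_of_real (1 / N2 L)) L)"
      using N2Lpos by (simp add: ip_sc_right)
  qed
qed


lemma bop_add: "bounded_op sc ip A \<Longrightarrow> A (x + y) = A x + A y" unfolding bounded_op_def by blast
lemma bop_sc: "bounded_op sc ip A \<Longrightarrow> A (sc c x) = sc c (A x)" unfolding bounded_op_def by blast
lemma bop_zero: "bounded_op sc ip A \<Longrightarrow> A 0 = 0"
proof -
  assume a: "bounded_op sc ip A"
  have "A 0 = A 0 + A 0" using bop_add[OF a, of 0 0] by simp
  then show ?thesis by (rule add_cancel_right_right[THEN iffD1])
qed
lemma bop_bound: "bounded_op sc ip A \<Longrightarrow> \<exists>K\<ge>0. \<forall>x. hnorm ip (A x) \<le> K * hnorm ip x"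
proof -
  assume "bounded_op sc ip A"
  then obtain K where K: "\<And>x. hnorm ip (A x) \<le> K * hnorm ip x" unfolding bounded_op_def by blast
  have "hnorm ip (A x) \<le> \<bar>K\<bar> * hnorm ip x" for x
    using K[of x] hnorm_nonneg[of x] by (meson abs_ge_self mult_right_mono order_trans)
  then show ?thesis by (intro exI[of _ "\<bar>K\<bar>"]) simp
qed

lemma bop_comp: "bounded_op sc ip A \<Longrightarrow> bounded_op sc ip B \<Longrightarrow> bounded_op sc ip (A \<circ> B)"
proof -
  assume a: "bounded_op sc ip A" and b: "bounded_op sc ip B"
  obtain K where K: "K \<ge> 0" "\<And>x. hnorm ip (A x) \<le> K * hnorm ip x" using bop_bound[OF a] by blast
  obtain K' where K': "K' \<ge> 0" "\<And>x. hnorm ip (B x) \<le> K' * hnorm ip x" using bop_bound[OF b] by blast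
  have "hnorm ip (A (B x)) \<le> (K * K') * hnorm ip x" for x
  proof -
    have "hnorm ip (A (B x)) \<le> K * hnorm ip (B x)" by (rule K(2))
    also have "\<dots> \<le> K * (K' * hnorm ip x)" using K(1) K'(2) by (rule mult_left_mono[rotated])
    finally show ?thesis by (simp add: mult.assoc)
  qed
  then show ?thesis unfolding bounded_op_def using bop_add[OF a] bop_add[OF b] bop_sc[OF a] bop_sc[OF b]
    by auto
qed

lemma bop_zero_op: "bounded_op sc ip (\<lambda>_. 0)"
  unfolding bounded_op_def by (auto intro: exI[of _ 0])

lemma has_adj: "bounded_op sc ip A \<Longrightarrow> \<exists>B. bounded_op sc ip B \<and> (\<forall>x y. ip (A x) y = ip x (B y))"
proof -
  assume a: "bounded_op sc ip A"
  obtain K where K: "K \<ge> 0" "\<And>x. hnorm ip (A x) \<le> K * hnorm ip x" using bop_bound[OF a] by blast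
  have "\<forall>y. \<exists>z. \<forall>x. ip (A x) y = ip x z"
  proof
    fix y
    show "\<exists>z. \<forall>x. ip (A x) y = ip x z"
    proof (rule riesz[of "\<lambda>x. ip (A x) y" "K * hnorm ip y"])
      show "ip (A (x1 + x2)) y = ip (A x1) y + ip (A x2) y" for x1 x2 by (simp add: bop_add[OF a] ip_add_left)
      show "ip (A (sc c x)) y = cnj c * ip (A x) y" for c x by (simp add: bop_sc[OF a] ip_sc_left)
      show "cmod (ip (A x) y) \<le> K * hnorm ip y * hnorm ip x" for x
      proof -
        have "cmod (ip (A x) y) \<le> hnorm ip (A x) * hnorm ip y" by (rule cauchy_schwarz)
        also have "\<dots> \<le> K * hnorm ip x * hnorm ip y" using K(2)[of x] hnorm_nonneg[of y] by (rule mult_right_mono)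
        finally show ?thesis by (simp add: ac_simps)
      qed
    qed
  qed
  then obtain B where B: "\<And>x y. ip (A x) y = ip x (B y)" by metis
  have "bounded_op sc ip B"
    unfolding bounded_op_def
  proof (intro conjI allI)
    fix y1 y2
    show "B (y1 + y2) = B y1 + B y2"
      by (rule ip_ext) (simp add: B[symmetric] ip_add_right)
  next
    fix c y
    show "B (sc c y) = sc c (B y)"
      by (rule ip_ext) (simp add: B[symmetric] ip_sc_right)
  next
    have "hnorm ip (B y) \<le> K * hnorm ip y" for y
    proof (cases "hnorm ip (B y) = 0")
      case True then show ?thesis using K(1) hnorm_nonneg[of y] by simp
    next
      case False
      then have pos: "hnorm ip (B y) > 0" using hnorm_nonneg[of "B y"] by simp
      have "hnorm ip (B y) * hnorm ip (B y) = Re (ip (B y) (B y))" using hnorm_sq[of "B y"] by (simp add: power2_eq_square)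
      also have "\<dots> = Re (ip (A (B y)) y)" by (simp add: B)
      also have "\<dots> \<le> cmod (ip (A (B y)) y)" by (rule complex_Re_le_cmod)
      also have "\<dots> \<le> hnorm ip (A (B y)) * hnorm ip y" by (rule cauchy_schwarz)
      also have "\<dots> \<le> K * hnorm ip (B y) * hnorm ip y" using K(2)[of "B y"] hnorm_nonneg[of y] by (rule mult_right_mono)
      finally have "hnorm ip (B y) * hnorm ip (B y) \<le> (K * hnorm ip y) * hnorm ip (B y)" by (simp add: ac_simps)
      then show ?thesis using pos by simp
    qed
    then show "\<exists>K. \<forall>x. hnorm ip (B x) \<le> K * hnorm ip x" by blast
  qed
  then show ?thesis using B by blast
qed

lemma adj_prop: "bounded_op sc ip A \<Longrightarrow> bounded_op sc ip (adj sc ip A) \<and> (\<forall>x y. ip (A x) y = ip x (adj sc ip A y))"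
proof -
  assume a: "bounded_op sc ip A"
  show ?thesis unfolding adj_def by (rule someI_ex[OF has_adj[OF a]])
qed

lemma adj_bop: "bounded_op sc ip A \<Longrightarrow> bounded_op sc ip (adj sc ip A)" using adj_prop by blast
lemma adj_ip: "bounded_op sc ip A \<Longrightarrow> ip (A x) y = ip x (adj sc ip A y)" using adj_prop by blast

lemma adj_unique: "bounded_op sc ip A \<Longrightarrow> (\<And>x y. ip (A x) y = ip x (B y)) \<Longrightarrow> adj sc ip A = B"
proof -
  assume a: "bounded_op sc ip A" and b: "\<And>x y. ip (A x) y = ip x (B y)"
  show ?thesis
  proof
    fix y show "adj sc ip A y = B y" by (rule ip_ext) (simp add: adj_ip[OF a, symmetric] b)
  qed
qed

lemma adj_comp: "bounded_op sc ip A \<Longrightarrow> bounded_op sc ip B \<Longrightarrow> adj sc ip (A \<circ> B) = adj sc ip B \<circ> adj sc ip A"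
  by (rule adj_unique) (auto simp: bop_comp adj_ip)

lemma adj_adj: "bounded_op sc ip A \<Longrightarrow> adj sc ip (adj sc ip A) = A"
proof (rule adj_unique)
  assume a: "bounded_op sc ip A"
  then show "bounded_op sc ip (adj sc ip A)" by (rule adj_bop)
  fix x y
  have "ip (adj sc ip A x) y = cnj (ip y (adj sc ip A x))" by (rule ip_sym)
  also have "\<dots> = cnj (ip (A y) x)" by (simp add: adj_ip[OF a])
  also have "\<dots> = ip x (A y)" by (rule ip_sym')
  finally show "ip (adj sc ip A x) y = ip x (A y)" .
qed

lemma adj_zero: "adj sc ip (\<lambda>_. 0) = (\<lambda>_. 0)"
  by (rule adj_unique) (auto simp: bop_zero_op)

lemma adj_cases: "bounded_op sc ip A \<Longrightarrow> adj sc ip (\<lambda>x. if b then A x else 0) = (\<lambda>x. if b then adj sc ip A x else 0)"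
  by (cases b) (simp_all add: adj_zero)

end



definition revwalk :: "('e \<Rightarrow> 'e) \<Rightarrow> 'e list \<Rightarrow> 'e list" where
  "revwalk erev p = rev (map erev p)"

lemma revwalk_Nil[simp]: "revwalk erev [] = []" by (simp add: revwalk_def)
lemma revwalk_Cons: "revwalk erev (a # p) = revwalk erev p @ [erev a]" by (simp add: revwalk_def)
lemma revwalk_append: "revwalk erev (p @ q) = revwalk erev q @ revwalk erev p" by (simp add: revwalk_def)
lemma revwalk_snoc: "revwalk erev (p @ [a]) = erev a # revwalk erev p" by (simp add: revwalk_def)

lemma nb_Nil[simp]: "non_backtracking erev []" by (simp add: non_backtracking_def)

lemma nb_Cons: "non_backtracking erev (a # p) \<longleftrightarrow> (p \<noteq> [] \<longrightarrow> hd p \<noteq> erev a) \<and> non_backtracking erev p"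
proof
  assume h: "non_backtracking erev (a # p)"
  have "p \<noteq> [] \<longrightarrow> hd p \<noteq> erev a"
    using h[unfolded non_backtracking_def, rule_format, of 0] by (cases p) auto
  moreover have "non_backtracking erev p" unfolding non_backtracking_def
  proof (intro allI impI)
    fix i assume "Suc i < length p"
    then show "p ! Suc i \<noteq> erev (p ! i)" using h[unfolded non_backtracking_def, rule_format, of "Suc i"] by simp
  qed
  ultimately show "(p \<noteq> [] \<longrightarrow> hd p \<noteq> erev a) \<and> non_backtracking erev p" by blast
next
  assume h: "(p \<noteq> [] \<longrightarrow> hd p \<noteq> erev a) \<and> non_backtracking erev p"
  show "non_backtracking erev (a # p)" unfolding non_backtracking_def
  proof (intro allI impI)
    fix i assume i: "Suc i < length (a # p)"
    show "(a # p) ! Suc i \<noteq> erev ((a # p) ! i)"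
    proof (cases i)
      case 0 then show ?thesis using h i by (cases p) auto
    next
      case (Suc j) then show ?thesis using h i unfolding non_backtracking_def by simp
    qed
  qed
qed

lemma nb_append: "non_backtracking erev (p @ q) \<longleftrightarrow>
   non_backtracking erev p \<and> non_backtracking erev q \<and> (p \<noteq> [] \<and> q \<noteq> [] \<longrightarrow> hd q \<noteq> erev (last p))"
proof (induction p)
  case Nil then show ?case by simp
next
  case (Cons a p)
  show ?case
  proof (cases p)
    case Nil then show ?thesis by (cases q) (auto simp add: nb_Cons)
  next
    case (Cons b p') then show ?thesis using Cons.IH by (simp add: nb_Cons)
  qed
qed

lemma nb_prefix: "non_backtracking erev (p @ q) \<Longrightarrow> non_backtracking erev p"
  by (simp add: nb_append)

lemma nb_rev:
  assumes inv: "\<And>a. erev (erev a) = a"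
  shows "non_backtracking erev p \<Longrightarrow> non_backtracking erev (revwalk erev p)"
proof (induction p)
  case Nil then show ?case by simp
next
  case (Cons a p)
  then have "non_backtracking erev p" "p \<noteq> [] \<longrightarrow> hd p \<noteq> erev a" by (simp_all add: nb_Cons)
  moreover have "p \<noteq> [] \<Longrightarrow> last (revwalk erev p) = erev (hd p)"
    by (simp add: revwalk_def last_rev hd_map)
  ultimately have h: "non_backtracking erev p" "p \<noteq> [] \<Longrightarrow> hd p \<noteq> erev a"
    "p \<noteq> [] \<Longrightarrow> last (revwalk erev p) = erev (hd p)" by blast+
  have n1: "non_backtracking erev (revwalk erev p)" using Cons.IH h(1) by blast
  have n2: "non_backtracking erev [erev a]" by (simp add: nb_Cons)
  have n3: "hd [erev a] \<noteq> erev (last (revwalk erev p))" if "revwalk erev p \<noteq> []"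
  proof -
    have p: "p \<noteq> []" using that by auto
    have "erev (last (revwalk erev p)) = hd p" using h(3)[OF p] inv by simp
    then show ?thesis using h(2)[OF p] by simp
  qed
  show ?case unfolding revwalk_Cons nb_append using n1 n2 n3 by blast
qed

lemma cas_upd: "pre_digraph.cas (G\<lparr>arcs := T\<rparr>) x p y = pre_digraph.cas G x p y"
  by (induction p arbitrary: x) (simp_all add: pre_digraph.cas.simps)

lemma awalk_upd: "pre_digraph.awalk (G\<lparr>arcs := T\<rparr>) x p y \<longleftrightarrow> x \<in> verts G \<and> set p \<subseteq> T \<and> pre_digraph.cas G x p y"
  by (simp add: pre_digraph.awalk_def cas_upd)

definition W :: "('v,'e) pre_digraph \<Rightarrow> 'e set \<Rightarrow> 'v \<Rightarrow> 'e list \<Rightarrow> 'v \<Rightarrow> bool" where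
  "W G T x p y \<longleftrightarrow> x \<in> verts G \<and> set p \<subseteq> T \<and> pre_digraph.cas G x p y"

lemma W_Nil[simp]: "W G T x [] y \<longleftrightarrow> x = y \<and> x \<in> verts G"
  by (auto simp: W_def pre_digraph.cas.simps)

locale tctx = bidirected_digraph G erev for G :: "('v,'e) pre_digraph" and erev +
  fixes T :: "'e set"
  assumes TG: "T \<subseteq> arcs G" and Trev: "\<And>a. a \<in> T \<Longrightarrow> erev a \<in> T"
begin

lemma W_Cons: "W G T x (a # p) y \<longleftrightarrow> a \<in> T \<and> tail G a = x \<and> W G T (head G a) p y"
  using TG by (auto simp: W_def)

lemma W_append: "W G T x (p @ q) z \<longleftrightarrow> (\<exists>y. W G T x p y \<and> W G T y q z)"
proof (induction p arbitrary: x)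
  case Nil then show ?case by (auto simp: W_def)
next
  case (Cons a p) then show ?case by (auto simp: W_Cons)
qed

lemma W_single: "W G T x [a] y \<longleftrightarrow> a \<in> T \<and> tail G a = x \<and> head G a = y"
  using TG by (auto simp: W_Cons)

lemma W_end_verts: "W G T x p y \<Longrightarrow> y \<in> verts G"
proof (induction p arbitrary: x)
  case Nil then show ?case by auto
next
  case (Cons a p) then show ?case by (auto simp: W_Cons)
qed

lemma W_rev: "W G T x p y \<Longrightarrow> W G T y (revwalk erev p) x"
proof (induction p arbitrary: x)
  case Nil then show ?case by auto
next
  case (Cons a p)
  then have a: "a \<in> T" "tail G a = x" "W G T (head G a) p y" by (simp_all add: W_Cons)
  then have "W G T y (revwalk erev p) (head G a)" using Cons.IH by blast
  moreover have "W G T (head G a) [erev a] x" using a TG Trev by (auto simp: W_single)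
  ultimately show ?case by (auto simp: revwalk_Cons W_append)
qed

lemma W_G: "W G T x p y \<Longrightarrow> pre_digraph.awalk G x p y"
  using TG by (auto simp: W_def pre_digraph.awalk_def)

lemma awalk_W: "pre_digraph.awalk (G\<lparr>arcs := T\<rparr>) x p y \<longleftrightarrow> W G T x p y"
  by (simp add: awalk_upd W_def)

lemma nb_exists: "W G T x p y \<Longrightarrow> \<exists>q. W G T x q y \<and> non_backtracking erev q"
proof (induction "length p" arbitrary: p rule: less_induct)
  case less
  show ?case
  proof (cases "non_backtracking erev p")
    case True then show ?thesis using less.prems by blast
  next
    case False
    then obtain i where i: "Suc i < length p" "p ! Suc i = erev (p ! i)"
      unfolding non_backtracking_def by blast
    define a where "a = p ! i"
    define r where "r = drop (Suc (Suc i)) p"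
    have d1: "drop i p = p ! i # drop (Suc i) p" using i by (simp add: Cons_nth_drop_Suc)
    have d2: "drop (Suc i) p = p ! Suc i # drop (Suc (Suc i)) p" by (rule Cons_nth_drop_Suc[symmetric]) (rule i(1))
    have "p = take i p @ drop i p" by simp
    also have "drop i p = [a, erev a] @ r" using d1 d2 i(2) by (simp add: a_def r_def)
    finally have p: "p = take i p @ [a, erev a] @ r" .
    have "W G T x (take i p @ ([a, erev a] @ r)) y" by (subst p[symmetric]) (rule less.prems)
    then obtain u where u1: "W G T x (take i p) u" "W G T u ([a, erev a] @ r) y"
      unfolding W_append by blast
    then obtain v where u2: "W G T u [a, erev a] v" "W G T v r y"
      unfolding W_append by blast
    note u = u1(1) u2
    then have "v = u" using TG by (auto simp: W_Cons)
    then have w: "W G T x (take i p @ r) y" using u W_append by blast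
    have "length (take i p @ r) < length p" using i by (simp add: r_def)
    then show ?thesis using less.hyps w by blast
  qed
qed

end

locale stctx = tctx +
  assumes notree: "\<not> (\<exists>u p. p \<noteq> [] \<and> W G T u p u \<and> non_backtracking erev p)"
begin

lemma nb_unique: "W G T x p y \<Longrightarrow> non_backtracking erev p \<Longrightarrow> W G T x q y \<Longrightarrow> non_backtracking erev q \<Longrightarrow> p = q"
proof (induction p arbitrary: q y rule: rev_induct)
  case Nil
  then have "x = y" by simp
  then have "W G T x q x" "non_backtracking erev q" using Nil.prems by simp_all
  then show ?case using notree by (cases q) auto
next
  case (snoc a p)
  show ?case
  proof (cases q rule: rev_exhaust)
    case Nil
    then have "x = y" using snoc.prems by simp
    then have "W G T x (p @ [a]) x" "non_backtracking erev (p @ [a])" using snoc.prems by simp_all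
    then show ?thesis using notree by blast
  next
    case (snoc q' b)
    obtain u where pu: "W G T x p u" "W G T u [a] y" using snoc.prems(1) unfolding W_append by blast
    obtain u' where qu: "W G T x q' u'" "W G T u' [b] y" using snoc.prems(3) unfolding \<open>q = q' @ [b]\<close> W_append by blast
    show ?thesis
    proof (cases "a = b")
      case True
      then have "u = u'" using pu qu by (simp add: W_single)
      moreover have "non_backtracking erev p" using snoc.prems(2) nb_prefix by blast
      moreover have "non_backtracking erev q'" using snoc.prems(4) \<open>q = q' @ [b]\<close> nb_prefix by blast
      ultimately have "p = q'" using snoc.IH pu qu by blast
      then show ?thesis using True \<open>q = q' @ [b]\<close> by simp
    next
      case False
      define w where "w = (p @ [a]) @ revwalk erev q"
      have wq: "W G T y (revwalk erev q) x" using snoc.prems(3) by (rule W_rev)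
      have Ww: "W G T x w x" unfolding w_def
        using W_append[of x "p @ [a]" "revwalk erev q" x] snoc.prems(1) wq by blast
      have nbq: "non_backtracking erev (revwalk erev q)" by (rule nb_rev[OF arev_arev snoc.prems(4)])
      have "hd (revwalk erev q) = erev b" using \<open>q = q' @ [b]\<close> by (simp add: revwalk_snoc)
      moreover have "erev b \<noteq> erev a"
      proof
        assume "erev b = erev a"
        then have "erev (erev b) = erev (erev a)" by simp
        then show False using False by simp
      qed
      ultimately have "hd (revwalk erev q) \<noteq> erev (last (p @ [a]))" by simp
      then have "non_backtracking erev w" unfolding w_def using nbq snoc.prems(2) by (simp add: nb_append nb_Cons)
      moreover have "w \<noteq> []" by (simp add: w_def)
      ultimately show ?thesis using Ww notree by blast
    qed
  qed
qed

end


locale spctx = bidirected_digraph G erev for G :: "('v,'e) pre_digraph" and erev +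
  fixes T :: "'e set"
  assumes sp: "is_spanning_tree G erev T"
begin

lemma sp_TG: "T \<subseteq> arcs G" using sp by (simp add: is_spanning_tree_def)
lemma sp_Trev: "a \<in> T \<Longrightarrow> erev a \<in> T" using sp by (simp add: is_spanning_tree_def)
lemma sp_conn: "connected (G\<lparr>arcs := T\<rparr>)" using sp by (simp add: is_spanning_tree_def)

end

sublocale spctx \<subseteq> stctx G erev T
proof -
  interpret tctx G erev T by unfold_locales (use sp_TG sp_Trev in auto)
  show "stctx G erev T"
  proof unfold_locales
    show "\<not> (\<exists>u p. p \<noteq> [] \<and> W G T u p u \<and> non_backtracking erev p)"
      using sp unfolding is_spanning_tree_def awalk_W by blast
  qed
qed

context spctx begin

lemma W_exists:
  assumes x: "x \<in> verts G" and y: "y \<in> verts G"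
  shows "\<exists>p. W G T x p y"
proof -
  define GT where "GT = G\<lparr>arcs := T\<rparr>"
  have wf: "wf_digraph GT" unfolding GT_def
    by unfold_locales (use sp_TG in auto)
  have sym: "symmetric GT"
  proof (unfold symmetric_def, rule symI)
    fix u v assume "(u, v) \<in> arcs_ends GT"
    then obtain a where a: "a \<in> T" "u = tail G a" "v = head G a"
      by (auto simp: arcs_ends_def arc_to_ends_def GT_def)
    then have "erev a \<in> T" "tail G (erev a) = v" "head G (erev a) = u"
      using sp_Trev sp_TG by auto
    then show "(v, u) \<in> arcs_ends GT"
      unfolding arcs_ends_def arc_to_ends_def GT_def by (auto intro!: image_eqI[of _ _ "erev a"])
  qed
  have "strongly_connected (mk_symmetric GT)" using sp_conn unfolding GT_def connected_def .
  moreover have "x \<in> verts (mk_symmetric GT)" "y \<in> verts (mk_symmetric GT)"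
    using x y by (simp_all add: GT_def)
  ultimately have "x \<rightarrow>\<^sup>*\<^bsub>mk_symmetric GT\<^esub> y" unfolding strongly_connected_def by blast
  then have "x \<rightarrow>\<^sup>*\<^bsub>GT\<^esub> y" using wf_digraph.reachable_mk_symmetric_eq[OF wf sym] by blast
  then obtain p where "pre_digraph.awalk GT x p y" using wf_digraph.reachable_awalk[OF wf] by blast
  then show ?thesis unfolding GT_def awalk_W by blast
qed

lemma tp_ex1: "x \<in> verts G \<Longrightarrow> y \<in> verts G \<Longrightarrow> \<exists>!p. W G T x p y \<and> non_backtracking erev p"
  using W_exists nb_exists nb_unique by metis

lemma tp_prop: "x \<in> verts G \<Longrightarrow> y \<in> verts G \<Longrightarrow>
    W G T x (tree_path G erev T x y) y \<and> non_backtracking erev (tree_path G erev T x y)"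
  unfolding tree_path_def awalk_W by (rule theI') (rule tp_ex1)

lemma tp_eq: "W G T x p y \<Longrightarrow> non_backtracking erev p \<Longrightarrow> tree_path G erev T x y = p"
proof -
  assume a: "W G T x p y" "non_backtracking erev p"
  have "x \<in> verts G" using a by (simp add: W_def)
  moreover have "y \<in> verts G" using a(1) by (rule W_end_verts)
  ultimately show ?thesis using tp_prop nb_unique a by blast
qed

lemma tp_rev: "x \<in> verts G \<Longrightarrow> y \<in> verts G \<Longrightarrow> tree_path G erev T y x = revwalk erev (tree_path G erev T x y)"
  using tp_prop[of x y] W_rev nb_rev[OF arev_arev] tp_eq by blast

lemma tp_G: "x \<in> verts G \<Longrightarrow> y \<in> verts G \<Longrightarrow> pre_digraph.awalk G x (tree_path G erev T x y) y"
  using tp_prop W_G by blast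

lemma tp_self: "x \<in> verts G \<Longrightarrow> tree_path G erev T x x = []"
  by (rule tp_eq) simp_all

end




lemma foldl_comp: "foldl (\<lambda>A f. U f \<circ> A) (X \<circ> Y) q = foldl (\<lambda>A f. U f \<circ> A) X q \<circ> Y"
  by (induction q arbitrary: X) (simp_all add: comp_assoc[symmetric])

locale opctx = bidirected_digraph G erev for G :: "('v,'e) pre_digraph" and erev +
  fixes sc :: "complex \<Rightarrow> 'h::ab_group_add \<Rightarrow> 'h" and ip :: "'h \<Rightarrow> 'h \<Rightarrow> complex"
    and P :: "'v \<Rightarrow> 'h \<Rightarrow> 'h" and U :: "'e \<Rightarrow> 'h \<Rightarrow> 'h"
  assumes grp: "groupoid_rep sc ip G erev P U"

sublocale opctx \<subseteq> chil sc ip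
  by unfold_locales (rule conjunct1[OF grp[unfolded groupoid_rep_def]])

context opctx begin

lemmas gr2 = conjunct2[OF grp[unfolded groupoid_rep_def]]
lemmas grV = conjunct1[OF gr2]
lemmas grA = conjunct2[OF conjunct2[OF conjunct2[OF gr2]]]

lemma P_bop: "v \<in> verts G \<Longrightarrow> bounded_op sc ip (P v)" using grV by blast
lemma P_idem: "v \<in> verts G \<Longrightarrow> P v \<circ> P v = P v" using grV by blast
lemma P_adj: "v \<in> verts G \<Longrightarrow> adj sc ip (P v) = P v" using grV by blast
lemma U_bop: "f \<in> arcs G \<Longrightarrow> bounded_op sc ip (U f)" using grA by blast
lemma U_PP: "f \<in> arcs G \<Longrightarrow> U f = P (head G f) \<circ> U f \<circ> P (tail G f)" using grA by blast
lemma U_u1: "f \<in> arcs G \<Longrightarrow> adj sc ip (U f) \<circ> U f = P (tail G f)" using grA by blast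
lemma U_u2: "f \<in> arcs G \<Longrightarrow> U f \<circ> adj sc ip (U f) = P (head G f)" using grA by blast
lemma U_rev: "f \<in> arcs G \<Longrightarrow> U (erev f) = adj sc ip (U f)" using grA by blast

lemma PU: "f \<in> arcs G \<Longrightarrow> P (head G f) \<circ> U f = U f"
proof -
  assume f: "f \<in> arcs G"
  have "P (head G f) \<circ> U f = (P (head G f) \<circ> P (head G f)) \<circ> U f \<circ> P (tail G f)"
    by (subst U_PP[OF f]) (simp add: comp_assoc)
  also have "\<dots> = U f" using f by (simp add: P_idem U_PP[symmetric])
  finally show ?thesis .
qed

lemma UP: "f \<in> arcs G \<Longrightarrow> U f \<circ> P (tail G f) = U f"
proof -
  assume f: "f \<in> arcs G"
  have "U f \<circ> P (tail G f) = P (head G f) \<circ> U f \<circ> (P (tail G f) \<circ> P (tail G f))"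
    by (subst U_PP[OF f]) (simp add: comp_assoc)
  also have "\<dots> = U f" using f by (simp add: P_idem U_PP[symmetric] comp_assoc[symmetric])
  finally show ?thesis .
qed

lemma Uwalk_Nil: "Uwalk P U x [] = P x" by (simp add: Uwalk_def)

lemma Uwalk_Cons: "f \<in> arcs G \<Longrightarrow> tail G f = x \<Longrightarrow> Uwalk P U x (f # q) = Uwalk P U (head G f) q \<circ> U f"
proof -
  assume f: "f \<in> arcs G" "tail G f = x"
  have "Uwalk P U x (f # q) = foldl (\<lambda>A f. U f \<circ> A) (U f \<circ> P x) q" by (simp add: Uwalk_def)
  also have "U f \<circ> P x = P (head G f) \<circ> U f" using f UP[OF f(1)] PU[OF f(1)] by simp
  also have "foldl (\<lambda>A f. U f \<circ> A) (P (head G f) \<circ> U f) q = Uwalk P U (head G f) q \<circ> U f"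
    unfolding Uwalk_def by (rule foldl_comp)
  finally show ?thesis .
qed

lemma Uwalk_snoc: "Uwalk P U x (p @ [f]) = U f \<circ> Uwalk P U x p" by (simp add: Uwalk_def)

lemma Uwalk_P: "x \<in> verts G \<Longrightarrow> Uwalk P U x q \<circ> P x = Uwalk P U x q"
proof -
  assume x: "x \<in> verts G"
  have "Uwalk P U x q = foldl (\<lambda>A f. U f \<circ> A) (P x \<circ> P x) q" using x by (simp add: Uwalk_def P_idem)
  then show ?thesis by (simp add: foldl_comp Uwalk_def)
qed

lemma Uwalk_append: "awalk x p y \<Longrightarrow> Uwalk P U x (p @ q) = Uwalk P U y q \<circ> Uwalk P U x p"
proof (induction p arbitrary: x)
  case Nil
  then have "x = y" "x \<in> verts G" by (auto simp: awalk_Nil_iff)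
  then show ?case by (simp add: Uwalk_Nil Uwalk_P)
next
  case (Cons a p)
  then have a: "a \<in> arcs G" "tail G a = x" "awalk (head G a) p y" by (simp_all add: awalk_Cons_iff)
  have "Uwalk P U x ((a # p) @ q) = Uwalk P U (head G a) (p @ q) \<circ> U a" using a by (simp add: Uwalk_Cons)
  also have "\<dots> = Uwalk P U y q \<circ> Uwalk P U (head G a) p \<circ> U a" by (simp only: Cons.IH[OF a(3)])
  also have "\<dots> = Uwalk P U y q \<circ> Uwalk P U x (a # p)" using a by (simp add: Uwalk_Cons comp_assoc)
  finally show ?case .
qed

lemma Uwalk_props: "awalk x p y \<Longrightarrow>
    bounded_op sc ip (Uwalk P U x p) \<and>
    adj sc ip (Uwalk P U x p) = Uwalk P U y (revwalk erev p) \<and>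
    adj sc ip (Uwalk P U x p) \<circ> Uwalk P U x p = P x \<and>
    Uwalk P U x p \<circ> adj sc ip (Uwalk P U x p) = P y \<and>
    P y \<circ> Uwalk P U x p = Uwalk P U x p \<and>
    Uwalk P U x p \<circ> P x = Uwalk P U x p"
proof (induction p arbitrary: x)
  case Nil
  then have "x = y" "x \<in> verts G" by (auto simp: awalk_Nil_iff)
  then show ?case by (simp add: Uwalk_Nil P_bop P_adj P_idem)
next
  case (Cons a q)
  then have a: "a \<in> arcs G" "tail G a = x" "awalk (head G a) q y" by (simp_all add: awalk_Cons_iff)
  define Wq where "Wq = Uwalk P U (head G a) q"
  have IH: "bounded_op sc ip Wq" "adj sc ip Wq = Uwalk P U y (revwalk erev q)"
     "adj sc ip Wq \<circ> Wq = P (head G a)" "Wq \<circ> adj sc ip Wq = P y"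
     "P y \<circ> Wq = Wq" "Wq \<circ> P (head G a) = Wq"
    using Cons.IH[OF a(3)] unfolding Wq_def by blast+
  have eq: "Uwalk P U x (a # q) = Wq \<circ> U a" using a by (simp add: Uwalk_Cons Wq_def)
  have bU: "bounded_op sc ip (U a)" by (rule U_bop[OF a(1)])
  have adjc: "adj sc ip (Wq \<circ> U a) = adj sc ip (U a) \<circ> adj sc ip Wq" by (rule adj_comp[OF IH(1) bU])
  have s1: "bounded_op sc ip (Wq \<circ> U a)" by (rule bop_comp[OF IH(1) bU])
  have s2: "adj sc ip (Wq \<circ> U a) = Uwalk P U y (revwalk erev (a # q))"
    unfolding adjc IH(2) U_rev[OF a(1), symmetric] revwalk_Cons Uwalk_snoc ..
  have s3: "adj sc ip (Wq \<circ> U a) \<circ> (Wq \<circ> U a) = P x"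
  proof -
    have "adj sc ip (Wq \<circ> U a) \<circ> (Wq \<circ> U a) = adj sc ip (U a) \<circ> (adj sc ip Wq \<circ> Wq) \<circ> U a"
      by (simp only: adjc comp_assoc)
    also have "\<dots> = adj sc ip (U a) \<circ> (P (head G a) \<circ> U a)" by (simp only: IH(3) comp_assoc)
    also have "\<dots> = adj sc ip (U a) \<circ> U a" by (simp only: PU[OF a(1)])
    also have "\<dots> = P x" by (simp only: U_u1[OF a(1)] a(2))
    finally show ?thesis .
  qed
  have s4: "(Wq \<circ> U a) \<circ> adj sc ip (Wq \<circ> U a) = P y"
  proof -
    have "(Wq \<circ> U a) \<circ> adj sc ip (Wq \<circ> U a) = Wq \<circ> (U a \<circ> adj sc ip (U a)) \<circ> adj sc ip Wq"
      by (simp only: adjc comp_assoc)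
    also have "\<dots> = Wq \<circ> adj sc ip Wq" by (simp only: U_u2[OF a(1)] IH(6))
    also have "\<dots> = P y" by (rule IH(4))
    finally show ?thesis .
  qed
  have s5: "P y \<circ> (Wq \<circ> U a) = Wq \<circ> U a" by (simp only: comp_assoc[symmetric] IH(5))
  have s6: "(Wq \<circ> U a) \<circ> P x = Wq \<circ> U a" by (simp only: comp_assoc a(2)[symmetric] UP[OF a(1)])
  show ?case unfolding eq using s1 s2 s3 s4 s5 s6 by blast
qed


lemma Utree_props:
  assumes sp: "is_spanning_tree G erev T" and x: "x \<in> verts G" and y: "y \<in> verts G"
  shows "bounded_op sc ip (Utree G erev P U T y x) \<and>
         adj sc ip (Utree G erev P U T y x) = Utree G erev P U T x y \<and>
         Utree G erev P U T y x \<circ> Utree G erev P U T x y = P y \<and>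
         Utree G erev P U T y x \<circ> P x = Utree G erev P U T y x \<and>
         Utree G erev P U T y x = Uwalk P U x (tree_path G erev T x y) \<and>
         awalk x (tree_path G erev T x y) y"
proof -
  interpret S: spctx G erev T by unfold_locales (rule sp)
  have aw: "awalk x (tree_path G erev T x y) y" by (rule S.tp_G[OF x y])
  note UP = Uwalk_props[OF aw]
  have tr: "tree_path G erev T y x = revwalk erev (tree_path G erev T x y)" by (rule S.tp_rev[OF x y])
  have adjW: "adj sc ip (Utree G erev P U T y x) = Utree G erev P U T x y"
    unfolding Utree_def tr using UP by blast
  have uu: "Utree G erev P U T y x \<circ> Utree G erev P U T x y = P y"
    unfolding adjW[symmetric] unfolding Utree_def using UP by blast
  show ?thesis using UP aw adjW uu unfolding Utree_def by blast
qed

lemma Utree_bop: "is_spanning_tree G erev T \<Longrightarrow> x \<in> verts G \<Longrightarrow> y \<in> verts G \<Longrightarrow> bounded_op sc ip (Utree G erev P U T y x)"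
  using Utree_props by blast
lemma Utree_adj: "is_spanning_tree G erev T \<Longrightarrow> x \<in> verts G \<Longrightarrow> y \<in> verts G \<Longrightarrow> adj sc ip (Utree G erev P U T y x) = Utree G erev P U T x y"
  using Utree_props by blast
lemma Utree_uu: "is_spanning_tree G erev T \<Longrightarrow> x \<in> verts G \<Longrightarrow> y \<in> verts G \<Longrightarrow> Utree G erev P U T y x \<circ> Utree G erev P U T x y = P y"
  using Utree_props by blast
lemma Utree_P: "is_spanning_tree G erev T \<Longrightarrow> x \<in> verts G \<Longrightarrow> y \<in> verts G \<Longrightarrow> Utree G erev P U T y x \<circ> P x = Utree G erev P U T y x"
  using Utree_props by blast
lemma Utree_aw: "is_spanning_tree G erev T \<Longrightarrow> x \<in> verts G \<Longrightarrow> y \<in> verts G \<Longrightarrow> awalk x (tree_path G erev T x y) y"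
  using Utree_props by blast

lemma Hc_P: "Hcomp G U u w \<circ> P w = Hcomp G U u w"
proof
  fix x
  have "(\<Sum>f\<in>{f \<in> arcs G. tail G f = w \<and> head G f = u}. U f (P w x)) =
        (\<Sum>f\<in>{f \<in> arcs G. tail G f = w \<and> head G f = u}. U f x)"
  proof (rule sum.cong)
    fix f assume "f \<in> {f \<in> arcs G. tail G f = w \<and> head G f = u}"
    then have f: "f \<in> arcs G" "tail G f = w" by auto
    have "U f (P w x) = (U f \<circ> P (tail G f)) x" using f by simp
    also have "\<dots> = U f x" by (simp only: UP[OF f(1)])
    finally show "U f (P w x) = U f x" .
  qed simp
  then show "(Hcomp G U u w \<circ> P w) x = Hcomp G U u w x" by (simp add: Hcomp_def)
qed

lemma Hc_0: "Hcomp G U u w 0 = 0"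
  unfolding Hcomp_def by (rule sum.neutral) (auto simp: bop_zero[OF U_bop])

lemma gen_in_A: "awalk r p r \<Longrightarrow> Uwalk P U r p \<in> Aalg sc ip G P U r"
  unfolding Aalg_def cstar_gen_def by blast

lemma zero_in_A: "r \<in> verts G \<Longrightarrow> (\<lambda>_. 0) \<in> Aalg sc ip G P U r"
proof -
  assume r: "r \<in> verts G"
  then have "awalk r [] r" by (simp add: awalk_Nil_iff)
  then have Pin: "P r \<in> {Uwalk P U r p | p. awalk r p r}" by (auto simp: Uwalk_Nil intro!: exI[of _ "[]"])
  show ?thesis unfolding Aalg_def cstar_gen_def
  proof (rule InterI)
    fix C assume "C \<in> {C. {Uwalk P U r p |p. awalk r p r} \<subseteq> C \<and> C \<subseteq> {A. bounded_op sc ip A} \<and>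
      (\<forall>A\<in>C. \<forall>B\<in>C. (\<lambda>x. A x + B x) \<in> C) \<and>
      (\<forall>A\<in>C. \<forall>c. (\<lambda>x. sc c (A x)) \<in> C) \<and>
      (\<forall>A\<in>C. \<forall>B\<in>C. A \<circ> B \<in> C) \<and>
      (\<forall>A\<in>C. adj sc ip A \<in> C) \<and>
      (\<forall>X L. (\<forall>n. X n \<in> C) \<and> bounded_op sc ip L \<and>
             (\<lambda>n. opnorm ip (\<lambda>x. X n x - L x)) \<longlonglongrightarrow> 0 \<longrightarrow> L \<in> C)}"
    note hh = this[unfolded mem_Collect_eq]
    have h: "{Uwalk P U r p |p. awalk r p r} \<subseteq> C" "\<forall>A\<in>C. \<forall>c. (\<lambda>x. sc c (A x)) \<in> C"
      using conjunct1[OF hh] conjunct1[OF conjunct2[OF conjunct2[OF conjunct2[OF hh]]]] by simp_all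
    have "P r \<in> C" using h(1) Pin by blast
    then have "(\<lambda>x. sc 0 (P r x)) \<in> C" using h(2) by blast
    then show "(\<lambda>_. 0) \<in> C" by simp
  qed
qed
end



locale mctx = opctx G erev sc ip P U for G :: "('v,'e) pre_digraph" and erev
    and sc :: "complex \<Rightarrow> 'h::ab_group_add \<Rightarrow> 'h" and ip P U +
  fixes T T' :: "'e set" and r r' :: 'v and ord ord' :: "nat \<Rightarrow> 'v" and k :: nat
  assumes fin: "fin_digraph G" and kdef: "k = card (verts G)"
    and o1: "ordered_rooted_spanning_tree G erev T r ord"
    and o2: "ordered_rooted_spanning_tree G erev T' r' ord'"
begin

lemma sp1: "is_spanning_tree G erev T" using o1 by (simp add: ordered_rooted_spanning_tree_def)
lemma sp2: "is_spanning_tree G erev T'" using o2 by (simp add: ordered_rooted_spanning_tree_def)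
lemma bij1: "bij_betw ord {..<k} (verts G)" using o1 kdef by (simp add: ordered_rooted_spanning_tree_def)
lemma bij2: "bij_betw ord' {..<k} (verts G)" using o2 kdef by (simp add: ordered_rooted_spanning_tree_def)
lemma r_def': "ord 0 = r" using o1 by (simp add: ordered_rooted_spanning_tree_def)
lemma r'_def': "ord' 0 = r'" using o2 by (simp add: ordered_rooted_spanning_tree_def)

lemma finV: "finite (verts G)" using fin by (simp add: fin_digraph_def fin_digraph_axioms_def)

lemma vne: "verts G \<noteq> {}"
proof -
  interpret S: spctx G erev T by unfold_locales (rule sp1)
  have "strongly_connected (mk_symmetric (G\<lparr>arcs := T\<rparr>))" using S.sp_conn unfolding connected_def .
  then have "verts (mk_symmetric (G\<lparr>arcs := T\<rparr>)) \<noteq> {}" unfolding strongly_connected_def by blast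
  then show ?thesis by simp
qed

lemma kpos: "0 < k" using kdef finV vne by (simp add: card_gt_0_iff)

lemma ord_in: "i < k \<Longrightarrow> ord i \<in> verts G" using bij1 by (auto dest: bij_betw_apply)
lemma ord'_in: "i < k \<Longrightarrow> ord' i \<in> verts G" using bij2 by (auto dest: bij_betw_apply)
lemma r_in: "r \<in> verts G" using ord_in[OF kpos] r_def' by simp
lemma r'_in: "r' \<in> verts G" using ord'_in[OF kpos] r'_def' by simp

definition \<sigma> :: "nat \<Rightarrow> nat" where
  "\<sigma> j = (if j < k then the_inv_into {..<k} ord' (ord j) else j)"
definition \<tau> :: "nat \<Rightarrow> nat" where
  "\<tau> i = the_inv_into {..<k} ord (ord' i)"

lemma inj1: "inj_on ord {..<k}" using bij1 by (simp add: bij_betw_def)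
lemma inj2: "inj_on ord' {..<k}" using bij2 by (simp add: bij_betw_def)
lemma img1: "ord ` {..<k} = verts G" using bij1 by (simp add: bij_betw_def)
lemma img2: "ord' ` {..<k} = verts G" using bij2 by (simp add: bij_betw_def)

lemma \<sigma>_lt: "l < k \<Longrightarrow> \<sigma> l < k"
  unfolding \<sigma>_def using the_inv_into_into[OF inj2, of "ord l" "{..<k}"] img2 ord_in by auto

lemma \<sigma>_ord: "l < k \<Longrightarrow> ord' (\<sigma> l) = ord l"
  unfolding \<sigma>_def using f_the_inv_into_f[OF inj2, of "ord l"] img2 ord_in by auto

lemma \<tau>_lt: "i < k \<Longrightarrow> \<tau> i < k"
  unfolding \<tau>_def using the_inv_into_into[OF inj1, of "ord' i" "{..<k}"] img1 ord'_in by auto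

lemma \<tau>_ord: "i < k \<Longrightarrow> ord (\<tau> i) = ord' i"
  unfolding \<tau>_def using f_the_inv_into_f[OF inj1, of "ord' i"] img1 ord'_in by auto

lemma \<sigma>_iff: "i < k \<Longrightarrow> l < k \<Longrightarrow> (i = \<sigma> l) \<longleftrightarrow> (l = \<tau> i)"
proof
  assume ik: "i < k" and lk: "l < k" and e: "i = \<sigma> l"
  have "ord (\<tau> i) = ord l" using \<tau>_ord[OF ik] \<sigma>_ord[OF lk] e by simp
  then show "l = \<tau> i" using inj1 \<tau>_lt[OF ik] lk by (auto dest: inj_onD)
next
  assume ik: "i < k" and lk: "l < k" and e: "l = \<tau> i"
  have "ord' (\<sigma> l) = ord' i" using \<tau>_ord[OF ik] \<sigma>_ord[OF lk] e by simp
  then show "i = \<sigma> l" using inj2 \<sigma>_lt[OF lk] ik by (auto dest: inj_onD)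
qed

lemma \<sigma>_inj: "i < k \<Longrightarrow> j < k \<Longrightarrow> \<sigma> i = \<sigma> j \<longleftrightarrow> i = j"
  using \<sigma>_iff \<sigma>_lt by metis

lemma \<sigma>_perm: "\<sigma> permutes {..<k}"
  unfolding permutes_def
proof (intro conjI allI impI)
  fix x assume "x \<notin> {..<k}" then show "\<sigma> x = x" by (simp add: \<sigma>_def)
next
  fix y
  show "\<exists>!x. \<sigma> x = y"
  proof (cases "y < k")
    case True
    show ?thesis
    proof (rule ex1I[of _ "\<tau> y"])
      show "\<sigma> (\<tau> y) = y" using \<sigma>_iff[OF True \<tau>_lt[OF True]] by simp
      fix x assume x: "\<sigma> x = y"
      show "x = \<tau> y"
      proof (cases "x < k")
        case True then show ?thesis using \<sigma>_iff[OF \<open>y < k\<close> True] x by simp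
      next
        case False then have "\<sigma> x = x" by (simp add: \<sigma>_def)
        then show ?thesis using x False True by simp
      qed
    qed
  next
    case False
    show ?thesis
    proof (rule ex1I[of _ y])
      show "\<sigma> y = y" using False by (simp add: \<sigma>_def)
      fix x assume x: "\<sigma> x = y"
      show "x = y"
      proof (cases "x < k")
        case True then show ?thesis using \<sigma>_lt x False by auto
      next
        case False then show ?thesis using x by (simp add: \<sigma>_def)
      qed
    qed
  qed
qed

lemma sum_sel: "i < k \<Longrightarrow> (\<Sum>l<k. if i = \<sigma> l then g l else 0) = g (\<tau> i)"
proof -
  assume ik: "i < k"
  have "(\<Sum>l<k. if i = \<sigma> l then g l else 0) = (\<Sum>l<k. if l = \<tau> i then g l else 0)"
    by (rule sum.cong) (use \<sigma>_iff[OF ik] in auto)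
  also have "\<dots> = g (\<tau> i)" using \<tau>_lt[OF ik] by simp
  finally show ?thesis .
qed

abbreviation UT where "UT \<equiv> Utree G erev P U"

definition D :: "nat \<Rightarrow> 'h \<Rightarrow> 'h" where
  "D i = UT T r r' \<circ> UT T' r' (ord' i) \<circ> UT T (ord' i) r"

lemma D_walk: "i < k \<Longrightarrow> \<exists>p. awalk r p r \<and> D i = Uwalk P U r p"
proof -
  assume ik: "i < k"
  define u where "u = ord' i"
  have u: "u \<in> verts G" using ord'_in[OF ik] by (simp add: u_def)
  define p1 where "p1 = tree_path G erev T r u"
  define p2 where "p2 = tree_path G erev T' u r'"
  define p3 where "p3 = tree_path G erev T r' r"
  have a1: "awalk r p1 u" "awalk u p2 r'" "awalk r' p3 r"
    unfolding p1_def p2_def p3_def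
    by (rule Utree_aw[OF sp1 r_in u], rule Utree_aw[OF sp2 u r'_in], rule Utree_aw[OF sp1 r'_in r_in])
  have aw: "awalk r (p1 @ p2 @ p3) r" using a1 by (auto intro: awalk_appendI)
  have "Uwalk P U r (p1 @ p2 @ p3) = Uwalk P U u (p2 @ p3) \<circ> Uwalk P U r p1"
    by (rule Uwalk_append[OF a1(1)])
  also have "Uwalk P U u (p2 @ p3) = Uwalk P U r' p3 \<circ> Uwalk P U u p2"
    by (rule Uwalk_append[OF a1(2)])
  also have "Uwalk P U r' p3 \<circ> Uwalk P U u p2 \<circ> Uwalk P U r p1 = D i"
    unfolding D_def u_def[symmetric] p1_def p2_def p3_def Utree_def ..
  finally show ?thesis using aw by metis
qed

lemma D_props: "i < k \<Longrightarrow> bounded_op sc ip (D i) \<and> D i \<in> Aalg sc ip G P U r \<and>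
   D i \<circ> adj sc ip (D i) = P r \<and> adj sc ip (D i) \<circ> D i = P r \<and> D i \<circ> P r = D i"
proof -
  assume ik: "i < k"
  obtain p where p: "awalk r p r" "D i = Uwalk P U r p" using D_walk[OF ik] by blast
  show ?thesis using Uwalk_props[OF p(1)] gen_in_A[OF p(1)] unfolding p(2) by blast
qed

lemma D_adj: "i < k \<Longrightarrow> adj sc ip (D i) = UT T r (ord' i) \<circ> UT T' (ord' i) r' \<circ> UT T r' r"
proof -
  assume ik: "i < k"
  define u where "u = ord' i"
  have u: "u \<in> verts G" using ord'_in[OF ik] by (simp add: u_def)
  note A = Utree_props[OF sp1 r'_in r_in]
  note B = Utree_props[OF sp2 u r'_in]
  note C = Utree_props[OF sp1 r_in u]
  have b1: "bounded_op sc ip (UT T r r')" by (rule Utree_bop[OF sp1 r'_in r_in])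
  have b2: "bounded_op sc ip (UT T' r' u)" by (rule Utree_bop[OF sp2 u r'_in])
  have b3: "bounded_op sc ip (UT T u r)" by (rule Utree_bop[OF sp1 r_in u])
  have "adj sc ip (D i) = adj sc ip (UT T u r) \<circ> adj sc ip (UT T r r' \<circ> UT T' r' u)"
    unfolding D_def u_def[symmetric] by (rule adj_comp[OF bop_comp[OF b1 b2] b3])
  also have "adj sc ip (UT T r r' \<circ> UT T' r' u) = adj sc ip (UT T' r' u) \<circ> adj sc ip (UT T r r')"
    by (rule adj_comp[OF b1 b2])
  also have "adj sc ip (UT T u r) \<circ> (adj sc ip (UT T' r' u) \<circ> adj sc ip (UT T r r')) = UT T r u \<circ> UT T' u r' \<circ> UT T r' r"
    by (simp only: Utree_adj[OF sp1 r'_in r_in] Utree_adj[OF sp2 u r'_in] Utree_adj[OF sp1 r_in u] comp_assoc)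
  finally show ?thesis by (simp add: u_def)
qed


definition M :: "'h opmat" where "M = mat_mult k (diag_mat D) (perm_mat P r \<sigma>)"
abbreviation H where "H \<equiv> mat_ham G erev P U T r ord"
abbreviation H' where "H' \<equiv> mat_ham G erev P U T' r' ord'"

lemma D_bop: "i < k \<Longrightarrow> bounded_op sc ip (D i)" using D_props by blast
lemma D_zero: "i < k \<Longrightarrow> D i 0 = 0" using bop_zero[OF D_bop] by blast

lemma M_entry: "i < k \<Longrightarrow> M i j = (if i = \<sigma> j then D i else (\<lambda>_. 0))"
proof
  fix x assume ik: "i < k"
  have "M i j x = (\<Sum>l<k. if i = l then D i (perm_mat P r \<sigma> l j x) else 0)"
    unfolding M_def mat_mult_def diag_mat_def by (intro sum.cong refl) (simp add: if_distribR)
  also have "\<dots> = D i (perm_mat P r \<sigma> i j x)" using ik by simp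
  also have "\<dots> = (if i = \<sigma> j then D i else (\<lambda>_. 0)) x"
  proof (cases "i = \<sigma> j")
    case True
    have "D i (P r x) = (D i \<circ> P r) x" by simp
    also have "\<dots> = D i x" using D_props[OF ik] by simp
    finally show ?thesis using True by (simp add: perm_mat_def)
  next
    case False then show ?thesis by (simp add: perm_mat_def D_zero[OF ik])
  qed
  finally show "M i j x = (if i = \<sigma> j then D i else (\<lambda>_. 0)) x" .
qed

lemma adjM: "i < k \<Longrightarrow> adj sc ip (M i j) = (if i = \<sigma> j then adj sc ip (D i) else (\<lambda>_. 0))"
  by (simp add: M_entry adj_zero)

lemma M_in: "i < k \<Longrightarrow> M i j \<in> Aalg sc ip G P U r"
  using M_entry D_props zero_in_A[OF r_in] by auto

lemma \<sigma>\<tau>: "i < k \<Longrightarrow> \<sigma> (\<tau> i) = i" using \<sigma>_iff[OF _ \<tau>_lt] by metis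

lemma MM: "mat_eq k (mat_mult k M (mat_adj sc ip M)) (mat_id P r)"
  unfolding mat_eq_def
proof (intro allI impI ext)
  fix i j x assume ik: "i < k" and jk: "j < k"
  have "mat_mult k M (mat_adj sc ip M) i j x =
        (\<Sum>l<k. if i = \<sigma> l then (if j = \<sigma> l then D i (adj sc ip (D j) x) else 0) else 0)"
    unfolding mat_mult_def mat_adj_def
  proof (intro sum.cong refl)
    fix l assume "l \<in> {..<k}"
    then have lk: "l < k" by simp
    show "M i l (adj sc ip (M j l) x) = (if i = \<sigma> l then (if j = \<sigma> l then D i (adj sc ip (D j) x) else 0) else 0)"
      using D_zero[OF ik] D_zero[OF \<sigma>_lt[OF lk]] by (simp add: M_entry[OF ik] adjM[OF jk])
  qed
  also have "\<dots> = (if j = \<sigma> (\<tau> i) then D i (adj sc ip (D j) x) else 0)"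
    by (rule sum_sel[OF ik])
  also have "\<dots> = mat_id P r i j x"
  proof (cases "i = j")
    case True
    have "D i (adj sc ip (D i) x) = (D i \<circ> adj sc ip (D i)) x" by simp
    also have "\<dots> = P r x" using D_props[OF ik] by simp
    finally show ?thesis using True \<sigma>\<tau>[OF ik] by (simp add: mat_id_def)
  next
    case False then show ?thesis using \<sigma>\<tau>[OF ik] by (simp add: mat_id_def)
  qed
  finally show "mat_mult k M (mat_adj sc ip M) i j x = mat_id P r i j x" .
qed

lemma MsM: "mat_eq k (mat_mult k (mat_adj sc ip M) M) (mat_id P r)"
  unfolding mat_eq_def
proof (intro allI impI ext)
  fix i j x assume ik: "i < k" and jk: "j < k"
  have "mat_mult k (mat_adj sc ip M) M i j x =
        (\<Sum>l<k. if \<sigma> i = l then (if \<sigma> j = \<sigma> i then adj sc ip (D (\<sigma> i)) (D (\<sigma> i) x) else 0) else 0)"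
    unfolding mat_mult_def mat_adj_def
  proof (intro sum.cong refl)
    fix l assume "l \<in> {..<k}"
    then have lk: "l < k" by simp
    have z: "adj sc ip (D l) 0 = 0" by (rule bop_zero[OF adj_bop[OF D_bop[OF lk]]])
    show "adj sc ip (M l i) (M l j x) =
      (if \<sigma> i = l then (if \<sigma> j = \<sigma> i then adj sc ip (D (\<sigma> i)) (D (\<sigma> i) x) else 0) else 0)"
      using z by (auto simp add: M_entry[OF lk] adjM[OF lk] adj_zero)
  qed
  also have "\<dots> = (if \<sigma> j = \<sigma> i then adj sc ip (D (\<sigma> i)) (D (\<sigma> i) x) else 0)"
    using \<sigma>_lt[OF ik] by simp
  also have "\<dots> = mat_id P r i j x"
  proof (cases "i = j")
    case True
    have "adj sc ip (D (\<sigma> i)) (D (\<sigma> i) x) = (adj sc ip (D (\<sigma> i)) \<circ> D (\<sigma> i)) x" by simp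
    also have "\<dots> = P r x" using D_props[OF \<sigma>_lt[OF ik]] by simp
    finally show ?thesis using True by (simp add: mat_id_def)
  next
    case False then show ?thesis using \<sigma>_inj[OF ik jk] by (simp add: mat_id_def)
  qed
  finally show "mat_mult k (mat_adj sc ip M) M i j x = mat_id P r i j x" .
qed

lemma H_zero: "l < k \<Longrightarrow> m < k \<Longrightarrow> H l m 0 = 0"
proof -
  assume lk: "l < k" and mk: "m < k"
  have "UT T (ord m) r 0 = 0" by (rule bop_zero[OF Utree_bop[OF sp1 r_in ord_in[OF mk]]])
  moreover have "UT T r (ord l) 0 = 0" by (rule bop_zero[OF Utree_bop[OF sp1 ord_in[OF lk] r_in]])
  ultimately show ?thesis by (simp add: mat_ham_def Hc_0)
qed

lemma key: "i < k \<Longrightarrow> j < k \<Longrightarrow>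
   D i \<circ> H (\<tau> i) (\<tau> j) \<circ> adj sc ip (D j) = UT T r r' \<circ> H' i j \<circ> UT T r' r"
proof -
  assume ik: "i < k" and jk: "j < k"
  define u where "u = ord' i"
  define w where "w = ord' j"
  have u: "u \<in> verts G" using ord'_in[OF ik] by (simp add: u_def)
  have w: "w \<in> verts G" using ord'_in[OF jk] by (simp add: w_def)
  have e1: "UT T u r \<circ> (UT T r u \<circ> X) = P u \<circ> X" for X
    using Utree_uu[OF sp1 r_in u] by (simp add: comp_assoc[symmetric])
  have e2: "UT T' r' u \<circ> (P u \<circ> X) = UT T' r' u \<circ> X" for X
    using Utree_P[OF sp2 u r'_in] by (simp add: comp_assoc[symmetric])
  have e3: "UT T w r \<circ> (UT T r w \<circ> X) = P w \<circ> X" for X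
    using Utree_uu[OF sp1 r_in w] by (simp add: comp_assoc[symmetric])
  have e4: "Hcomp G U u w \<circ> (P w \<circ> X) = Hcomp G U u w \<circ> X" for X
    using Hc_P[of u w] by (simp add: comp_assoc[symmetric])
  have Hij: "H (\<tau> i) (\<tau> j) = UT T r u \<circ> Hcomp G U u w \<circ> UT T w r"
    by (simp add: mat_ham_def \<tau>_ord[OF ik] \<tau>_ord[OF jk] u_def w_def)
  have H'ij: "H' i j = UT T' r' u \<circ> Hcomp G U u w \<circ> UT T' w r'"
    by (simp add: mat_ham_def u_def w_def)
  show ?thesis
    unfolding Hij H'ij D_adj[OF jk] unfolding D_def u_def[symmetric] w_def[symmetric]
    by (simp only: comp_assoc e1 e2 e3 e4)
qed

lemma conjM: "mat_eq k (mat_mult k (mat_mult k M H) (mat_adj sc ip M))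
                 (\<lambda>i j. UT T r r' \<circ> H' i j \<circ> UT T r' r)"
  unfolding mat_eq_def
proof (intro allI impI ext)
  fix i j x assume ik: "i < k" and jk: "j < k"
  have MH: "mat_mult k M H i m y = D i (H (\<tau> i) m y)" for m y
  proof -
    have "mat_mult k M H i m y = (\<Sum>l<k. if i = \<sigma> l then D i (H l m y) else 0)"
      unfolding mat_mult_def by (intro sum.cong refl) (simp add: M_entry[OF ik])
    also have "\<dots> = D i (H (\<tau> i) m y)" by (rule sum_sel[OF ik])
    finally show ?thesis .
  qed
  have "mat_mult k (mat_mult k M H) (mat_adj sc ip M) i j x =
        (\<Sum>m<k. if j = \<sigma> m then D i (H (\<tau> i) m (adj sc ip (D j) x)) else 0)"
    unfolding mat_mult_def[of k "mat_mult k M H"] mat_adj_def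
  proof (intro sum.cong refl)
    fix m assume "m \<in> {..<k}"
    then have mk: "m < k" by simp
    show "mat_mult k M H i m (adj sc ip (M j m) x) = (if j = \<sigma> m then D i (H (\<tau> i) m (adj sc ip (D j) x)) else 0)"
      by (simp add: MH adjM[OF jk] H_zero[OF \<tau>_lt[OF ik] mk] D_zero[OF ik])
  qed
  also have "\<dots> = D i (H (\<tau> i) (\<tau> j) (adj sc ip (D j) x))" by (rule sum_sel[OF jk])
  also have "\<dots> = (D i \<circ> H (\<tau> i) (\<tau> j) \<circ> adj sc ip (D j)) x" by simp
  also have "\<dots> = (UT T r r' \<circ> H' i j \<circ> UT T r' r) x" by (simp only: key[OF ik jk])
  finally show "mat_mult k (mat_mult k M H) (mat_adj sc ip M) i j x = (UT T r r' \<circ> H' i j \<circ> UT T r' r) x" .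
qed

lemma main_ex: "\<exists>M. (\<forall>i<k. \<forall>j<k. M i j \<in> Aalg sc ip G P U r) \<and>
             mat_eq k (mat_mult k M (mat_adj sc ip M)) (mat_id P r) \<and>
             mat_eq k (mat_mult k (mat_adj sc ip M) M) (mat_id P r) \<and>
             mat_eq k (mat_mult k (mat_mult k M (mat_ham G erev P U T r ord)) (mat_adj sc ip M))
                      (\<lambda>i j. Utree G erev P U T r r' \<circ> mat_ham G erev P U T' r' ord' i j
                              \<circ> Utree G erev P U T r' r) \<and>
             (\<exists>D \<sigma>. \<sigma> permutes {..<k} \<and>
                    (\<forall>i<k. unitary_in sc ip (Aalg sc ip G P U r) (P r) (D i)) \<and>
                    mat_eq k M (mat_mult k (diag_mat D) (perm_mat P r \<sigma>)))"
proof (rule exI[of _ M], intro conjI)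
  show "\<forall>i<k. \<forall>j<k. M i j \<in> Aalg sc ip G P U r" using M_in by blast
  show "mat_eq k (mat_mult k M (mat_adj sc ip M)) (mat_id P r)" by (rule MM)
  show "mat_eq k (mat_mult k (mat_adj sc ip M) M) (mat_id P r)" by (rule MsM)
  show "mat_eq k (mat_mult k (mat_mult k M H) (mat_adj sc ip M))
                      (\<lambda>i j. UT T r r' \<circ> H' i j \<circ> UT T r' r)" by (rule conjM)
  have "\<forall>i<k. unitary_in sc ip (Aalg sc ip G P U r) (P r) (D i)"
    using D_props unfolding unitary_in_def by blast
  then show "\<exists>D \<sigma>. \<sigma> permutes {..<k} \<and>
                    (\<forall>i<k. unitary_in sc ip (Aalg sc ip G P U r) (P r) (D i)) \<and>
                    mat_eq k M (mat_mult k (diag_mat D) (perm_mat P r \<sigma>))"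
    using \<sigma>_perm by (intro exI[of _ D] exI[of _ \<sigma>]) (simp add: M_def mat_eq_def)
qed

end


theorem mainTheorem1:
  fixes sc :: "complex \<Rightarrow> 'h::ab_group_add \<Rightarrow> 'h" and ip :: "'h \<Rightarrow> 'h \<Rightarrow> complex"
    and G :: "('v,'e) pre_digraph" and erev :: "'e \<Rightarrow> 'e"
    and P :: "'v \<Rightarrow> 'h \<Rightarrow> 'h" and U :: "'e \<Rightarrow> 'h \<Rightarrow> 'h"
    and T T' :: "'e set" and r r' :: 'v and ord ord' :: "nat \<Rightarrow> 'v" and k :: nat
  assumes "fin_digraph G" and "bidirected_digraph G erev" and "connected G"
    and "k = card (verts G)"
    and "groupoid_rep sc ip G erev P U"
    and "ordered_rooted_spanning_tree G erev T r ord"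
    and "ordered_rooted_spanning_tree G erev T' r' ord'"
  shows "\<exists>M. (\<forall>i<k. \<forall>j<k. M i j \<in> Aalg sc ip G P U r) \<and>
             mat_eq k (mat_mult k M (mat_adj sc ip M)) (mat_id P r) \<and>
             mat_eq k (mat_mult k (mat_adj sc ip M) M) (mat_id P r) \<and>
             mat_eq k (mat_mult k (mat_mult k M (mat_ham G erev P U T r ord)) (mat_adj sc ip M))
                      (\<lambda>i j. Utree G erev P U T r r' \<circ> mat_ham G erev P U T' r' ord' i j
                              \<circ> Utree G erev P U T r' r) \<and>
             (\<exists>D \<sigma>. \<sigma> permutes {..<k} \<and>
                    (\<forall>i<k. unitary_in sc ip (Aalg sc ip G P U r) (P r) (D i)) \<and>
                    mat_eq k M (mat_mult k (diag_mat D) (perm_mat P r \<sigma>)))"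
proof -
  interpret mctx G erev sc ip P U T T' r r' ord ord' k
  proof (rule mctx.intro)
    show "opctx G erev sc ip P U"
      by (rule opctx.intro[OF assms(2)]) (rule opctx_axioms.intro[OF assms(5)])
    show "mctx_axioms G erev T T' r r' ord ord' k"
      by (rule mctx_axioms.intro[OF assms(1) assms(4) assms(6) assms(7)])
  qed
  show ?thesis by (rule main_ex)
qed

end
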